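(* Let $M$ be an ordinal monoid with merge. For every $A\subseteq M$ there exists an FO-approximant of $\pi$ from $A^{+}$ (the finite nonempty words over $A$, viewed as a subset of $M^{\mathrm{ord}}$) to $\mathrm{Cl}^{+}_{\sharp}(A)$.
   Context: Countable ordinal words over $\Sigma$: maps $w\colon\alpha\to\Sigma$, $\alpha$ a countable ordinal; $\Sigma^{\mathrm{ord}}$ their set. An ordinal monoid: set $M$ with $\pi\colon M^{\mathrm{ord}}\to M$, $\pi(x)=x$ on one-letter words, generalised associativity; $1=\pi(\varepsilon)$, $x\cdot y=\pi(xy)$, $x^\omega=\pi(xxx\cdots)$; ordered by $\le$ if $u\le v$ letterwise implies $\pi(u)\le\pi(v)$. $x^!$ idempotent power, $x^{!+k}$ eventual value of $x^{n!+k}$ in a finite semigroup. Ordinal monoid with merge: $(M,1,\le,\cdot,-^\omega,-^\sharp)$, $M$ finite, $(M,1,\le,\cdot,-^\omega)$ the presentation of an ordered finite ordinal monoid, $-^\sharp$ monotone with $a^{!+k}\le a^\sharp$, $(a^!)^\sharp=a^!$, $a^\sharp a^\sharp=(a^\sharp)^\sharp=a^\sharp$, $(ab)^\sharp=a(ba)^\sharp b$. $\mathrm{Cl}^{+}_{\sharp}(A)$ is the closure of $A$ under $\cdot$ and $-^\sharp$. FO logic over alphabet $M$ (atoms $x<y$, $a(x)$); FO-definable languages and maps (preimages FO-definable). For FO-definable $L\subseteq M^{\mathrm{ord}}$, an FO-approximant of $\pi$ over $L$ is an FO-definable $\rho\colon L\to M$ with $\pi(u)\le\rho(u)$ for all $u\in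 L$; it is "from $L$ to $Y$" if its values lie in $Y\subseteq M$. *)

theory Defs
  imports Main
begin

text \<open>A countable ordinal word over an alphabet is represented by a well-order r on a
subset of nat (its positions, Field r) together with a labelling w. Every countable
ordinal is order-isomorphic to such a well-order, and words are identified up to
label-preserving order isomorphism (the product pi is required to be invariant).\<close>

type_synonym 'a oword = "nat rel \<times> (nat \<Rightarrow> 'a)"

definition ordword :: "'a oword \<Rightarrow> bool" where
  "ordword u \<longleftrightarrow> Well_order (fst u)"

definition wdom :: "'a oword \<Rightarrow> nat set" where
  "wdom u = Field (fst u)"

definition words_over :: "'a set \<Rightarrow> 'a oword set" where
  "words_over S = {u. ordword u \<and> (\<forall>x\<in>wdom u. snd u x \<in> S)}"

definition word_iso :: "'a oword \<Rightarrow> 'a oword \<Rightarrow> bool" where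
  "word_iso u v \<longleftrightarrow> (\<exists>f. iso (fst u) (fst v) f \<and> (\<forall>x\<in>wdom u. snd v (f x) = snd u x))"

definition restr :: "nat rel \<Rightarrow> nat set \<Rightarrow> nat rel" where
  "restr r S = r \<inter> (S \<times> S)"

definition empty_word :: "'a oword" where
  "empty_word = ({}, (\<lambda>_. undefined))"

definition plus_words :: "'a set \<Rightarrow> 'a oword set" where
  "plus_words A = {u \<in> words_over A. finite (wdom u) \<and> wdom u \<noteq> {}}"

definition ordered_ordinal_monoid :: "('m \<Rightarrow> 'm \<Rightarrow> bool) \<Rightarrow> ('m oword \<Rightarrow> 'm) \<Rightarrow> bool" where
  "ordered_ordinal_monoid le pi \<longleftrightarrow>
     \<comment> \<open>le is a partial order\<close>
     (\<forall>x. le x x) \<and> (\<forall>x y z. le x y \<longrightarrow> le y z \<longrightarrow> le x z) \<and>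
     (\<forall>x y. le x y \<longrightarrow> le y x \<longrightarrow> x = y) \<and>
     \<comment> \<open>pi depends only on the isomorphism class of the word\<close>
     (\<forall>u v. ordword u \<longrightarrow> ordword v \<longrightarrow> word_iso u v \<longrightarrow> pi u = pi v) \<and>
     \<comment> \<open>pi on one-letter words\<close>
     (\<forall>n w. pi ({(n, n)}, w) = w n) \<and>
     \<comment> \<open>generalised associativity, nonempty blocks: a partition of the positions into
         convex blocks, each block represented by one of its elements\<close>
     (\<forall>u blk. ordword u \<longrightarrow>
        (\<forall>x\<in>wdom u. blk x \<in> wdom u \<and> blk (blk x) = blk x) \<longrightarrow>
        (\<forall>x y z. x \<in> wdom u \<longrightarrow> z \<in> wdom u \<longrightarrow> (x, y) \<in> fst u \<longrightarrow> (y, z) \<in> fst u \<longrightarrow>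
                 blk x = blk z \<longrightarrow> blk y = blk x) \<longrightarrow>
        pi u = pi (restr (fst u) (blk ` wdom u),
                   (\<lambda>m. pi (restr (fst u) {x \<in> wdom u. blk x = m}, snd u)))) \<and>
     \<comment> \<open>generalised associativity, empty blocks: letters equal to pi of the empty word
         may be deleted\<close>
     (\<forall>u E. ordword u \<longrightarrow> E \<subseteq> wdom u \<longrightarrow> (\<forall>e\<in>E. snd u e = pi empty_word) \<longrightarrow>
        pi u = pi (restr (fst u) (wdom u - E), snd u)) \<and>
     \<comment> \<open>pi is monotone letterwise\<close>
     (\<forall>r w w'. ordword (r, w) \<longrightarrow> (\<forall>x\<in>Field r. le (w x) (w' x)) \<longrightarrow>
        le (pi (r, w)) (pi (r, w')))"

definition mult :: "('m oword \<Rightarrow> 'm) \<Rightarrow> 'm \<Rightarrow> 'm \<Rightarrow> 'm" where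
  "mult pi a b = pi ({(0, 0), (0, 1), (1, 1)}, (\<lambda>n. if n = 0 then a else b))"

definition mpow :: "('m oword \<Rightarrow> 'm) \<Rightarrow> 'm \<Rightarrow> nat \<Rightarrow> 'm" where
  "mpow pi a n = pi ({(i, j). i \<le> j \<and> j < n}, (\<lambda>_. a))"

definition idem_plus :: "('m oword \<Rightarrow> 'm) \<Rightarrow> 'm \<Rightarrow> nat \<Rightarrow> 'm" where
  "idem_plus pi a k = (THE x. \<exists>N. \<forall>n\<ge>N. mpow pi a (fact n + k) = x)"

definition idem :: "('m oword \<Rightarrow> 'm) \<Rightarrow> 'm \<Rightarrow> 'm" where
  "idem pi a = idem_plus pi a 0"

definition ordinal_monoid_with_merge ::
  "('m::finite \<Rightarrow> 'm \<Rightarrow> bool) \<Rightarrow> ('m oword \<Rightarrow> 'm) \<Rightarrow> ('m \<Rightarrow> 'm) \<Rightarrow> bool" where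
  "ordinal_monoid_with_merge le pi sh \<longleftrightarrow>
     ordered_ordinal_monoid le pi \<and>
     (\<forall>a b. le a b \<longrightarrow> le (sh a) (sh b)) \<and>
     (\<forall>a k. le (idem_plus pi a k) (sh a)) \<and>
     (\<forall>a. sh (idem pi a) = idem pi a) \<and>
     (\<forall>a. mult pi (sh a) (sh a) = sh a) \<and>
     (\<forall>a. sh (sh a) = sh a) \<and>
     (\<forall>a b. sh (mult pi a b) = mult pi a (mult pi (sh (mult pi b a)) b))"

inductive_set cl_sharp :: "('m oword \<Rightarrow> 'm) \<Rightarrow> ('m \<Rightarrow> 'm) \<Rightarrow> 'm set \<Rightarrow> 'm set"
  for pi sh A where
  base: "a \<in> A \<Longrightarrow> a \<in> cl_sharp pi sh A"
| mul: "a \<in> cl_sharp pi sh A \<Longrightarrow> b \<in> cl_sharp pi sh A \<Longrightarrow> mult pi a b \<in> cl_sharp pi sh A"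
| shp: "a \<in> cl_sharp pi sh A \<Longrightarrow> sh a \<in> cl_sharp pi sh A"

datatype 'a fo =
    FLess nat nat
  | FEq nat nat
  | FLetter 'a nat
  | FNeg "'a fo"
  | FConj "'a fo" "'a fo"
  | FEx nat "'a fo"

fun fv :: "'a fo \<Rightarrow> nat set" where
  "fv (FLess x y) = {x, y}"
| "fv (FEq x y) = {x, y}"
| "fv (FLetter a x) = {x}"
| "fv (FNeg f) = fv f"
| "fv (FConj f g) = fv f \<union> fv g"
| "fv (FEx x f) = fv f - {x}"

fun sat :: "'a oword \<Rightarrow> (nat \<Rightarrow> nat) \<Rightarrow> 'a fo \<Rightarrow> bool" where
  "sat u s (FLess x y) \<longleftrightarrow> (s x, s y) \<in> fst u \<and> s x \<noteq> s y"
| "sat u s (FEq x y) \<longleftrightarrow> s x = s y"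
| "sat u s (FLetter a x) \<longleftrightarrow> snd u (s x) = a"
| "sat u s (FNeg f) \<longleftrightarrow> \<not> sat u s f"
| "sat u s (FConj f g) \<longleftrightarrow> sat u s f \<and> sat u s g"
| "sat u s (FEx x f) \<longleftrightarrow> (\<exists>p\<in>wdom u. sat u (s(x := p)) f)"

definition fo_definable :: "'a oword set \<Rightarrow> bool" where
  "fo_definable L \<longleftrightarrow> (\<exists>f. fv f = {} \<and> L = {u. ordword u \<and> sat u (\<lambda>_. 0) f})"

definition fo_approximant ::
  "('m \<Rightarrow> 'm \<Rightarrow> bool) \<Rightarrow> ('m oword \<Rightarrow> 'm) \<Rightarrow> 'm oword set \<Rightarrow> 'm set \<Rightarrow> ('m oword \<Rightarrow> 'm) \<Rightarrow> bool" where
  "fo_approximant le pi L Y rho \<longleftrightarrow>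
     fo_definable L \<and> (\<forall>m. fo_definable {u \<in> L. rho u = m}) \<and>
     (\<forall>u\<in>L. le (pi u) (rho u) \<and> rho u \<in> Y)"

end

theory Submission
  imports Defs
begin


fun satL :: "'a list \<Rightarrow> (nat \<Rightarrow> nat) \<Rightarrow> 'a fo \<Rightarrow> bool" where
  "satL w s (FLess x y) \<longleftrightarrow> s x < s y"
| "satL w s (FEq x y) \<longleftrightarrow> s x = s y"
| "satL w s (FLetter a x) \<longleftrightarrow> w ! (s x) = a"
| "satL w s (FNeg f) \<longleftrightarrow> \<not> satL w s f"
| "satL w s (FConj f g) \<longleftrightarrow> satL w s f \<and> satL w s g"
| "satL w s (FEx x f) \<longleftrightarrow> (\<exists>p<length w. satL w (s(x := p)) f)"

lemma satL_cong: "(\<forall>v\<in>fv f. s v = s' v) \<Longrightarrow> satL w s f = satL w s' f"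
proof (induction f arbitrary: s s')
  case (FEx x f)
  have "satL w (s(x := p)) f = satL w (s'(x := p)) f" for p
    by (rule FEx.IH) (use FEx.prems in auto)
  then show ?case by simp
next
  case (FConj f g)
  have "satL w s f = satL w s' f" by (rule FConj.IH(1)) (use FConj.prems in auto)
  moreover have "satL w s g = satL w s' g" by (rule FConj.IH(2)) (use FConj.prems in auto)
  ultimately show ?case by simp
next
  case (FNeg f)
  have "satL w s f = satL w s' f" by (rule FNeg.IH) (use FNeg.prems in auto)
  then show ?case by simp
qed simp_all

lemma satL_closed: "fv f = {} \<Longrightarrow> satL w s f = satL w (\<lambda>_. 0) f"
  by (rule satL_cong) auto

definition FOL :: "'a list set \<Rightarrow> bool" where
  "FOL K \<longleftrightarrow> (\<exists>f. fv f = {} \<and> (\<forall>w. satL w (\<lambda>_. 0) f \<longleftrightarrow> w \<in> K))"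

lemma FOL_I: "fv f = {} \<Longrightarrow> (\<And>w. satL w (\<lambda>_. 0) f \<longleftrightarrow> w \<in> K) \<Longrightarrow> FOL K"
  unfolding FOL_def by blast

lemma FOL_compl: "FOL K \<Longrightarrow> FOL (- K)"
proof -
  assume "FOL K"
  then obtain f where "fv f = {}" "\<forall>w. satL w (\<lambda>_. 0) f \<longleftrightarrow> w \<in> K" unfolding FOL_def by blast
  then show ?thesis by (intro FOL_I[of "FNeg f"]) auto
qed

lemma FOL_Int: "FOL K \<Longrightarrow> FOL L \<Longrightarrow> FOL (K \<inter> L)"
proof -
  assume "FOL K" "FOL L"
  then obtain f g where "fv f = {}" "\<forall>w. satL w (\<lambda>_. 0) f \<longleftrightarrow> w \<in> K"
    "fv g = {}" "\<forall>w. satL w (\<lambda>_. 0) g \<longleftrightarrow> w \<in> L" unfolding FOL_def by blast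
  then show ?thesis by (intro FOL_I[of "FConj f g"]) auto
qed

lemma FOL_Un: "FOL K \<Longrightarrow> FOL L \<Longrightarrow> FOL (K \<union> L)"
proof -
  assume "FOL K" "FOL L"
  then have "FOL (- (- K \<inter> - L))" by (intro FOL_compl FOL_Int)
  then show ?thesis by simp
qed

lemma FOL_UNIV: "FOL UNIV"
  by (rule FOL_I[of "FNeg (FEx 0 (FNeg (FEq 0 0)))"]) auto

lemma FOL_empty: "FOL {}"
  using FOL_compl[OF FOL_UNIV] by simp

lemma FOL_UN: "finite I \<Longrightarrow> (\<And>i. i \<in> I \<Longrightarrow> FOL (K i)) \<Longrightarrow> FOL (\<Union>i\<in>I. K i)"
  by (induction I rule: finite_induct) (auto intro: FOL_Un FOL_empty)

lemma FOL_INT: "finite I \<Longrightarrow> (\<And>i. i \<in> I \<Longrightarrow> FOL (K i)) \<Longrightarrow> FOL (\<Inter>i\<in>I. K i)"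
  by (induction I rule: finite_induct) (auto intro: FOL_Int FOL_UNIV)

lemma FOL_eq: "FOL K \<Longrightarrow> K = L \<Longrightarrow> FOL L" by simp

lemma FOL_occ: "FOL {w. a \<in> set w}"
  by (rule FOL_I[of "FEx 0 (FLetter a 0)"]) (auto simp: in_set_conv_nth)

lemma FOL_content: "FOL {w. set w \<subseteq> (X::'a::finite set)}"
proof -
  have "{w. set w \<subseteq> X} = (\<Inter>a\<in>-X. - {w. a \<in> set w})" by auto
  moreover have "FOL (\<Inter>a\<in>-X. - {w. a \<in> set w})"
    by (rule FOL_INT) (auto intro: FOL_compl FOL_occ)
  ultimately show ?thesis by simp
qed

fun shiftF :: "nat \<Rightarrow> 'a fo \<Rightarrow> 'a fo" where
  "shiftF k (FLess x y) = FLess (x+k) (y+k)"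
| "shiftF k (FEq x y) = FEq (x+k) (y+k)"
| "shiftF k (FLetter a x) = FLetter a (x+k)"
| "shiftF k (FNeg f) = FNeg (shiftF k f)"
| "shiftF k (FConj f g) = FConj (shiftF k f) (shiftF k g)"
| "shiftF k (FEx x f) = FEx (x+k) (shiftF k f)"

fun bv :: "'a fo \<Rightarrow> nat set" where
  "bv (FNeg f) = bv f"
| "bv (FConj f g) = bv f \<union> bv g"
| "bv (FEx x f) = insert x (bv f)"
| "bv _ = {}"

lemma satL_shiftF: "satL w s (shiftF k f) = satL w (\<lambda>v. s (v+k)) f"
proof (induction f arbitrary: s)
  case (FEx x f)
  have "\<And>p. (\<lambda>v. (s(x + k := p)) (v + k)) = (\<lambda>v. s (v + k))(x := p)" by auto
  then show ?case using FEx by simp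
qed auto

lemma fv_shiftF: "fv (shiftF k f) = (\<lambda>v. v+k) ` fv f"
  by (induction f) auto

lemma bv_shiftF: "bv (shiftF k f) = (\<lambda>v. v+k) ` bv f"
  by (induction f) auto

section \<open>Relativisation to an interval\<close>

definition inI :: "nat option \<Rightarrow> nat option \<Rightarrow> nat \<Rightarrow> 'a fo" where
  "inI lo hi z = FConj (case lo of None \<Rightarrow> FEq z z | Some l \<Rightarrow> FLess l z)
                      (case hi of None \<Rightarrow> FEq z z | Some h \<Rightarrow> FLess z h)"

fun relI :: "nat option \<Rightarrow> nat option \<Rightarrow> 'a fo \<Rightarrow> 'a fo" where
  "relI lo hi (FEx x f) = FEx x (FConj (inI lo hi x) (relI lo hi f))"
| "relI lo hi (FNeg f) = FNeg (relI lo hi f)"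
| "relI lo hi (FConj f g) = FConj (relI lo hi f) (relI lo hi g)"
| "relI lo hi (FLess x y) = FLess x y"
| "relI lo hi (FEq x y) = FEq x y"
| "relI lo hi (FLetter a x) = FLetter a x"

definition st :: "(nat \<Rightarrow> nat) \<Rightarrow> nat option \<Rightarrow> nat" where
  "st s lo = (case lo of None \<Rightarrow> 0 | Some l \<Rightarrow> Suc (s l))"

definition en :: "'a list \<Rightarrow> (nat \<Rightarrow> nat) \<Rightarrow> nat option \<Rightarrow> nat" where
  "en w s hi = (case hi of None \<Rightarrow> length w | Some h \<Rightarrow> s h)"

lemma fv_relI: "fv (relI lo hi f) \<subseteq> fv f \<union> set_option lo \<union> set_option hi"
  by (induction f) (auto simp: inI_def split: option.splits)

lemma satL_inI:
  "s z < length w \<Longrightarrow> satL w s (inI lo hi z) \<longleftrightarrow> st s lo \<le> s z \<and> s z < en w s hi"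
  by (auto simp: inI_def st_def en_def split: option.splits)

lemma satL_relI:
  assumes "\<forall>l. lo = Some l \<longrightarrow> l \<notin> bv f" "\<forall>h. hi = Some h \<longrightarrow> h \<notin> bv f"
    and "st s lo \<le> en w s hi" "en w s hi \<le> length w"
    and "\<forall>v\<in>fv f. st s lo \<le> s v \<and> s v < en w s hi"
  shows "satL w s (relI lo hi f) \<longleftrightarrow>
     satL (take (en w s hi - st s lo) (drop (st s lo) w)) (\<lambda>v. s v - st s lo) f"
  using assms
proof (induction f arbitrary: s)
  case (FLess x y)
  then show ?case by auto
next
  case (FEq x y)
  then show ?case by auto
next
  case (FLetter a x)
  then show ?case by auto
next
  case (FNeg f)
  then show ?case by auto
next
  case (FConj f g)
  then show ?case by auto
next
  case (FEx x f)
  define a where "a = st s lo"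
  define b where "b = en w s hi"
  have xl: "lo \<noteq> Some x" "hi \<noteq> Some x" using FEx.prems by auto
  have sta: "\<And>p. st (s(x:=p)) lo = a" using xl unfolding a_def st_def by (auto split: option.splits)
  have enb: "\<And>p. en w (s(x:=p)) hi = b" using xl unfolding b_def en_def by (auto split: option.splits)
  have fun_eq: "\<And>p. (\<lambda>v. (s(x:=p)) v - a) = (\<lambda>v. s v - a)(x := p - a)" by auto
  have "satL w s (relI lo hi (FEx x f)) \<longleftrightarrow>
     (\<exists>p<length w. a \<le> p \<and> p < b \<and> satL w (s(x:=p)) (relI lo hi f))"
  proof -
    have "satL w (s(x:=p)) (inI lo hi x) \<longleftrightarrow> a \<le> p \<and> p < b" if "p < length w" for p
      using satL_inI[where w=w and s="s(x:=p)" and lo=lo and hi=hi and z=x] that sta enb by simp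
    then show ?thesis by (simp only: relI.simps satL.simps) (metis fun_upd_same)
  qed
  also have "\<dots> \<longleftrightarrow> (\<exists>p<length w. a \<le> p \<and> p < b \<and>
        satL (take (b - a) (drop a w)) ((\<lambda>v. s v - a)(x := p - a)) f)"
  proof -
    have "satL w (s(x:=p)) (relI lo hi f) \<longleftrightarrow> satL (take (b - a) (drop a w)) ((\<lambda>v. s v - a)(x := p - a)) f"
      if "a \<le> p" "p < b" for p
    proof -
      have "satL w (s(x:=p)) (relI lo hi f) \<longleftrightarrow>
          satL (take (en w (s(x:=p)) hi - st (s(x:=p)) lo) (drop (st (s(x:=p)) lo) w))
             (\<lambda>v. (s(x:=p)) v - st (s(x:=p)) lo) f"
        apply (rule FEx.IH)
        apply (simp_all only: sta enb)
        using FEx.prems that a_def b_def by auto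
      then show ?thesis using sta enb fun_eq by simp
    qed
    then show ?thesis by blast
  qed
  also have "\<dots> \<longleftrightarrow> (\<exists>q<b - a. satL (take (b - a) (drop a w)) ((\<lambda>v. s v - a)(x := q)) f)"
  proof
    assume "\<exists>p<length w. a \<le> p \<and> p < b \<and> satL (take (b - a) (drop a w)) ((\<lambda>v. s v - a)(x := p - a)) f"
    then obtain p where "a \<le> p" "p < b" "satL (take (b - a) (drop a w)) ((\<lambda>v. s v - a)(x := p - a)) f" by blast
    then show "\<exists>q<b - a. satL (take (b - a) (drop a w)) ((\<lambda>v. s v - a)(x := q)) f"
      by (intro exI[of _ "p - a"]) auto
  next
    assume "\<exists>q<b - a. satL (take (b - a) (drop a w)) ((\<lambda>v. s v - a)(x := q)) f"
    then obtain q where "q < b - a" "satL (take (b - a) (drop a w)) ((\<lambda>v. s v - a)(x := q)) f" by blast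
    then show "\<exists>p<length w. a \<le> p \<and> p < b \<and> satL (take (b - a) (drop a w)) ((\<lambda>v. s v - a)(x := p - a)) f"
      using FEx.prems a_def b_def by (intro exI[of _ "q + a"]) auto
  qed
  also have "\<dots> \<longleftrightarrow> satL (take (b - a) (drop a w)) (\<lambda>v. s v - a) (FEx x f)"
    using FEx.prems a_def b_def by auto
  finally show ?case unfolding a_def b_def .
qed


definition cps :: "'a list \<Rightarrow> 'a \<Rightarrow> nat list" where
  "cps w c = filter (\<lambda>i. w ! i = c) [0..<length w]"

definition rk :: "'a list \<Rightarrow> 'a \<Rightarrow> nat \<Rightarrow> nat" where
  "rk w c p = length (filter (\<lambda>i. w ! i = c) [0..<p])"

lemma rk_less:
  assumes "p < q" "w ! p = c" shows "rk w c p < rk w c q"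
proof -
  have "[0..<q] = [0..<p] @ [p..<q]" using upt_add_eq_append[of 0 p "q - p"] assms by simp
  moreover have "[p..<q] = p # [Suc p..<q]" using assms upt_conv_Cons by blast
  ultimately show ?thesis using assms unfolding rk_def by simp
qed

lemma rk_lt_len:
  assumes "p < length w" "w ! p = c" shows "rk w c p < length (cps w c)"
proof -
  have "[0..<length w] = [0..<p] @ [p..<length w]" using upt_add_eq_append[of 0 p "length w - p"] assms by simp
  moreover have "[p..<length w] = p # [Suc p..<length w]" using assms upt_conv_Cons by blast
  ultimately show ?thesis using assms unfolding rk_def cps_def by simp
qed

lemma cps_nth_rk:
  assumes "p < length w" "w ! p = c" shows "cps w c ! rk w c p = p"
proof -
  have "[0..<length w] = [0..<p] @ [p..<length w]" using upt_add_eq_append[of 0 p "length w - p"] assms by simp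
  moreover have "[p..<length w] = p # [Suc p..<length w]" using assms upt_conv_Cons by blast
  ultimately show ?thesis using assms unfolding rk_def cps_def by (simp add: nth_append)
qed

lemma cps_nth:
  assumes "j < length (cps w c)"
  shows "cps w c ! j < length w \<and> w ! (cps w c ! j) = c \<and> rk w c (cps w c ! j) = j"
proof -
  have m: "cps w c ! j \<in> set (cps w c)" using assms by simp
  then have 1: "cps w c ! j < length w" "w ! (cps w c ! j) = c" unfolding cps_def by auto
  have d: "distinct (cps w c)" unfolding cps_def by simp
  have "cps w c ! rk w c (cps w c ! j) = cps w c ! j" using cps_nth_rk[OF 1] .
  then have "rk w c (cps w c ! j) = j"
    using nth_eq_iff_index_eq[OF d rk_lt_len[OF 1] assms] by simp
  then show ?thesis using 1 by simp
qed

lemma rk_inj: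
  assumes "p < length w" "w ! p = c" "q < length w" "w ! q = c"
  shows "rk w c p = rk w c q \<longleftrightarrow> p = q"
  using rk_less[of p q w c] rk_less[of q p w c] assms by (cases "p < q"; cases "q < p") auto

lemma rk_less_iff:
  assumes "p < length w" "w ! p = c" "q < length w" "w ! q = c"
  shows "rk w c p < rk w c q \<longleftrightarrow> p < q"
  using rk_less[of p q w c] rk_less[of q p w c] assms by (cases "p < q"; cases "q < p") auto

section \<open>Substitution of letters by formulas, relativised to c-positions\<close>

fun substF :: "('a \<Rightarrow> nat \<Rightarrow> 'a fo) \<Rightarrow> 'a \<Rightarrow> 'a fo \<Rightarrow> 'a fo" where
  "substF \<phi> c (FLess x y) = FLess x y"
| "substF \<phi> c (FEq x y) = FEq x y"
| "substF \<phi> c (FLetter a x) = \<phi> a x"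
| "substF \<phi> c (FNeg f) = FNeg (substF \<phi> c f)"
| "substF \<phi> c (FConj f g) = FConj (substF \<phi> c f) (substF \<phi> c g)"
| "substF \<phi> c (FEx x f) = FEx x (FConj (FLetter c x) (substF \<phi> c f))"

lemma fv_substF:
  assumes "\<And>a x. fv (\<phi> a x) \<subseteq> {x}" shows "fv (substF \<phi> c f) \<subseteq> fv f"
  using assms by (induction f) auto

lemma satL_substF:
  assumes phisem: "\<And>a x s. s x < length w \<Longrightarrow> w ! s x = c \<Longrightarrow> satL w s (\<phi> a x) \<longleftrightarrow> tw ! rk w c (s x) = a"
    and len: "length tw = length (cps w c)"
    and "\<forall>v\<in>fv f. s v < length w \<and> w ! s v = c"
  shows "satL w s (substF \<phi> c f) \<longleftrightarrow> satL tw (\<lambda>v. rk w c (s v)) f"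
  using assms(3)
proof (induction f arbitrary: s)
  case (FLess x y)
  then show ?case using rk_less_iff[of "s x" w c "s y"] by auto
next
  case (FEq x y)
  then show ?case using rk_inj[of "s x" w c "s y"] by auto
next
  case (FLetter a x)
  then show ?case using phisem[of s x a] by auto
next
  case (FNeg f)
  then show ?case by auto
next
  case (FConj f g)
  then show ?case by auto
next
  case (FEx x f)
  have eq: "\<And>p. (\<lambda>v. rk w c ((s(x:=p)) v)) = (\<lambda>v. rk w c (s v))(x := rk w c p)" by auto
  have "satL w s (substF \<phi> c (FEx x f)) \<longleftrightarrow>
     (\<exists>p<length w. w ! p = c \<and> satL w (s(x:=p)) (substF \<phi> c f))" by simp
  also have "\<dots> \<longleftrightarrow> (\<exists>p<length w. w ! p = c \<and> satL tw ((\<lambda>v. rk w c (s v))(x := rk w c p)) f)"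
  proof -
    have "satL w (s(x:=p)) (substF \<phi> c f) \<longleftrightarrow> satL tw ((\<lambda>v. rk w c (s v))(x := rk w c p)) f"
      if "p < length w" "w ! p = c" for p
    proof -
      have pre: "\<forall>v\<in>fv f. (s(x:=p)) v < length w \<and> w ! (s(x:=p)) v = c" using FEx.prems that by auto
      have "satL w (s(x:=p)) (substF \<phi> c f) \<longleftrightarrow> satL tw (\<lambda>v. rk w c ((s(x:=p)) v)) f"
        by (rule FEx.IH[OF pre])
      then show ?thesis by (simp only: eq)
    qed
    then show ?thesis by blast
  qed
  also have "\<dots> \<longleftrightarrow> (\<exists>j<length tw. satL tw ((\<lambda>v. rk w c (s v))(x := j)) f)"
  proof
    assume "\<exists>p<length w. w ! p = c \<and> satL tw ((\<lambda>v. rk w c (s v))(x := rk w c p)) f"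
    then obtain p where "p < length w" "w ! p = c" "satL tw ((\<lambda>v. rk w c (s v))(x := rk w c p)) f" by blast
    then show "\<exists>j<length tw. satL tw ((\<lambda>v. rk w c (s v))(x := j)) f"
      using rk_lt_len[of p w c] len by auto
  next
    assume "\<exists>j<length tw. satL tw ((\<lambda>v. rk w c (s v))(x := j)) f"
    then obtain j where "j < length tw" "satL tw ((\<lambda>v. rk w c (s v))(x := j)) f" by blast
    then show "\<exists>p<length w. w ! p = c \<and> satL tw ((\<lambda>v. rk w c (s v))(x := rk w c p)) f"
      using cps_nth[of j w c] len by (intro exI[of _ "cps w c ! j"]) auto
  qed
  finally show ?case by simp
qed



section \<open>Blocks after occurrences of c\<close>

definition blk :: "'a list \<Rightarrow> 'a \<Rightarrow> nat \<Rightarrow> 'a list" where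
  "blk w c p = takeWhile (\<lambda>x. x \<noteq> c) (drop (Suc p) w)"

definition Or :: "'a fo \<Rightarrow> 'a fo \<Rightarrow> 'a fo" where
  "Or f g = FNeg (FConj (FNeg f) (FNeg g))"

lemma satL_Or[simp]: "satL w s (Or f g) \<longleftrightarrow> satL w s f \<or> satL w s g"
  unfolding Or_def by simp

lemma fv_Or[simp]: "fv (Or f g) = fv f \<union> fv g"
  unfolding Or_def by simp

definition nextcF :: "'a \<Rightarrow> nat \<Rightarrow> nat \<Rightarrow> nat \<Rightarrow> 'a fo" where
  "nextcF c x y z = FConj (FLetter c y) (FConj (FLess x y)
      (FNeg (FEx z (FConj (FLess x z) (FConj (FLess z y) (FLetter c z))))))"

definition nocF :: "'a \<Rightarrow> nat \<Rightarrow> nat \<Rightarrow> 'a fo" where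
  "nocF c x z = FNeg (FEx z (FConj (FLess x z) (FLetter c z)))"

definition phiB :: "'a \<Rightarrow> ('a \<Rightarrow> 'a fo) \<Rightarrow> 'a \<Rightarrow> nat \<Rightarrow> 'a fo" where
  "phiB c G a x = Or
     (FEx (x+1) (FConj (nextcF c x (x+1) (x+2)) (relI (Some x) (Some (x+1)) (shiftF (x+3) (G a)))))
     (FConj (nocF c x (x+1)) (relI (Some x) None (shiftF (x+3) (G a))))"

lemma fv_phiB:
  assumes "\<And>a. fv (G a) = {}" shows "fv (phiB c G a x) \<subseteq> {x}"
proof -
  have "fv (relI (Some x) (Some (x+1)) (shiftF (x+3) (G a))) \<subseteq> {x, x+1}"
    using fv_relI[of "Some x" "Some (x+1)" "shiftF (x+3) (G a)"] assms by (fastforce simp: fv_shiftF)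
  moreover have "fv (relI (Some x) None (shiftF (x+3) (G a))) \<subseteq> {x}"
    using fv_relI[of "Some x" None "shiftF (x+3) (G a)"] assms by (simp add: fv_shiftF)
  ultimately show ?thesis unfolding phiB_def nextcF_def nocF_def by auto
qed

lemma satL_G_slice:
  assumes "fv g = {}" "k > l" "k > h"
    and that: "Suc (s l) \<le> s h" "s h \<le> length w"
  shows "satL w s (relI (Some l) (Some h) (shiftF k g)) \<longleftrightarrow>
           satL (take (s h - Suc (s l)) (drop (Suc (s l)) w)) (\<lambda>_. 0) g"
proof -
  have "satL w s (relI (Some l) (Some h) (shiftF k g)) \<longleftrightarrow>
     satL (take (en w s (Some h) - st s (Some l)) (drop (st s (Some l)) w)) (\<lambda>v. s v - st s (Some l)) (shiftF k g)"
    by (rule satL_relI) (use assms that in \<open>auto simp: bv_shiftF fv_shiftF st_def en_def\<close>)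
  also have "\<dots> \<longleftrightarrow> satL (take (s h - Suc (s l)) (drop (Suc (s l)) w)) (\<lambda>_. 0) g"
    unfolding satL_shiftF st_def en_def using satL_closed[OF assms(1)] by simp
  finally show ?thesis .
qed

lemma satL_G_slice_end:
  assumes "fv g = {}" "k > l" and that: "s l < length w"
  shows "satL w s (relI (Some l) None (shiftF k g)) \<longleftrightarrow>
           satL (drop (Suc (s l)) w) (\<lambda>_. 0) g"
proof -
  have "satL w s (relI (Some l) None (shiftF k g)) \<longleftrightarrow>
     satL (take (en w s None - st s (Some l)) (drop (st s (Some l)) w)) (\<lambda>v. s v - st s (Some l)) (shiftF k g)"
    by (rule satL_relI) (use assms that in \<open>auto simp: bv_shiftF fv_shiftF st_def en_def\<close>)
  also have "\<dots> \<longleftrightarrow> satL (drop (Suc (s l)) w) (\<lambda>_. 0) g"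
    unfolding satL_shiftF st_def en_def using satL_closed[OF assms(1)] by simp
  finally show ?thesis .
qed

lemma satL_phiB:
  assumes Gfv: "\<And>a. fv (G a) = {}" and Gsem: "\<And>a v. satL v (\<lambda>_. 0) (G a) \<longleftrightarrow> g v = a"
    and px: "s x < length w"
  shows "satL w s (phiB c G a x) \<longleftrightarrow> g (blk w c (s x)) = a"
proof (cases "\<exists>q. s x < q \<and> q < length w \<and> w ! q = c")
  case True
  define q where "q = (LEAST q. s x < q \<and> q < length w \<and> w ! q = c)"
  have q: "s x < q" "q < length w" "w ! q = c" using LeastI_ex[OF True] unfolding q_def by auto
  have qmin: "\<And>z. s x < z \<Longrightarrow> z < q \<Longrightarrow> w ! z \<noteq> c"
    using not_less_Least q(2) unfolding q_def by fastforce
  have nx: "\<And>y. y < length w \<Longrightarrow> satL w (s(x+1 := y)) (nextcF c x (x+1) (x+2)) \<longleftrightarrow> y = q"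
  proof -
    fix y assume y: "y < length w"
    show "satL w (s(x+1 := y)) (nextcF c x (x+1) (x+2)) \<longleftrightarrow> y = q"
    proof
      assume "satL w (s(x+1 := y)) (nextcF c x (x+1) (x+2))"
      then have "w ! y = c" "s x < y" "\<And>z. z < length w \<Longrightarrow> s x < z \<Longrightarrow> z < y \<Longrightarrow> w ! z \<noteq> c"
        unfolding nextcF_def by auto
      then show "y = q" using q qmin y by (metis linorder_neqE_nat)
    next
      assume "y = q"
      then show "satL w (s(x+1 := y)) (nextcF c x (x+1) (x+2))"
        unfolding nextcF_def using q qmin by auto
    qed
  qed
  have "blk w c (s x) = take (q - Suc (s x)) (drop (Suc (s x)) w)"
    unfolding blk_def
    by (rule takeWhile_eq_take_P_nth) (use q qmin in auto)
  moreover have "satL w s (phiB c G a x) \<longleftrightarrow>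
      satL w (s(x+1 := q)) (relI (Some x) (Some (x+1)) (shiftF (x+3) (G a)))"
  proof -
    have "\<not> satL w s (nocF c x (x+1))" unfolding nocF_def using q by auto
    then show ?thesis unfolding phiB_def using nx q(2) by auto
  qed
  moreover have "satL w (s(x+1 := q)) (relI (Some x) (Some (x+1)) (shiftF (x+3) (G a))) \<longleftrightarrow>
       satL (take (q - Suc (s x)) (drop (Suc (s x)) w)) (\<lambda>_. 0) (G a)"
  proof -
    have "satL w (s(x+1 := q)) (relI (Some x) (Some (x+1)) (shiftF (x+3) (G a))) \<longleftrightarrow>
       satL (take ((s(x+1:=q)) (x+1) - Suc ((s(x+1:=q)) x)) (drop (Suc ((s(x+1:=q)) x)) w)) (\<lambda>_. 0) (G a)"
      by (rule satL_G_slice[OF Gfv]) (use q in auto)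
    then show ?thesis by simp
  qed
  ultimately show ?thesis using Gsem by simp
next
  case False
  have "\<forall>y\<in>set (drop (Suc (s x)) w). y \<noteq> c"
  proof
    fix y assume "y \<in> set (drop (Suc (s x)) w)"
    then obtain i where i: "i < length (drop (Suc (s x)) w)" "drop (Suc (s x)) w ! i = y"
      by (auto simp: in_set_conv_nth)
    then have "Suc (s x) + i < length w" "w ! (Suc (s x) + i) = y" by auto
    then show "y \<noteq> c" using False by (metis add_Suc less_add_Suc1)
  qed
  then have "blk w c (s x) = drop (Suc (s x)) w"
    unfolding blk_def by simp
  moreover have "satL w s (phiB c G a x) \<longleftrightarrow> satL w s (relI (Some x) None (shiftF (x+3) (G a)))"
  proof -
    have "\<not> satL w (s(x+1 := y)) (nextcF c x (x+1) (x+2))" if "y < length w" for y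
      unfolding nextcF_def using False that by auto
    moreover have "satL w s (nocF c x (x+1))" unfolding nocF_def using False by auto
    ultimately show ?thesis unfolding phiB_def by auto
  qed
  moreover have "satL w s (relI (Some x) None (shiftF (x+3) (G a))) \<longleftrightarrow> satL (drop (Suc (s x)) w) (\<lambda>_. 0) (G a)"
    by (rule satL_G_slice_end[OF Gfv]) (use px in auto)
  ultimately show ?thesis using Gsem by simp
qed

definition tword :: "('a list \<Rightarrow> 'b) \<Rightarrow> 'a \<Rightarrow> 'a list \<Rightarrow> 'b list" where
  "tword g c w = map (\<lambda>p. g (blk w c p)) (cps w c)"

lemma FOL_blocks:
  fixes g :: "'a list \<Rightarrow> 'a"
  assumes "\<And>a. FOL {v. g v = a}" and "FOL K"
  shows "FOL {w. tword g c w \<in> K}"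
proof -
  define G where "G a = (SOME f. fv f = {} \<and> (\<forall>v. satL v (\<lambda>_. 0) f \<longleftrightarrow> v \<in> {v. g v = a}))" for a
  have G: "fv (G a) = {} \<and> (\<forall>v. satL v (\<lambda>_. 0) (G a) \<longleftrightarrow> g v = a)" for a
    using someI_ex[OF assms(1)[of a, unfolded FOL_def]] unfolding G_def by simp
  obtain f where f: "fv f = {}" "\<forall>w. satL w (\<lambda>_. 0) f \<longleftrightarrow> w \<in> K" using assms(2) unfolding FOL_def by blast
  show ?thesis
  proof (rule FOL_I[of "substF (phiB c G) c f"])
    show "fv (substF (phiB c G) c f) = {}"
      using fv_substF[of "phiB c G" c f] fv_phiB[of G c] G f(1) by auto
  next
    fix w
    have "satL w (\<lambda>_. 0) (substF (phiB c G) c f) \<longleftrightarrow> satL (tword g c w) (\<lambda>v. rk w c 0) f"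
    proof (rule satL_substF)
      fix a and x :: nat and s :: "nat \<Rightarrow> nat" assume "s x < length w" "w ! s x = c"
      then show "satL w s (phiB c G a x) \<longleftrightarrow> tword g c w ! rk w c (s x) = a"
        using satL_phiB[of G g s x w c a] G rk_lt_len[of "s x" w c] cps_nth_rk[of "s x" w c]
        unfolding tword_def by auto
    qed (use f in \<open>auto simp: tword_def\<close>)
    also have "\<dots> \<longleftrightarrow> tword g c w \<in> K" using satL_closed[OF f(1)] f(2) by metis
    finally show "satL w (\<lambda>_. 0) (substF (phiB c G) c f) \<longleftrightarrow> w \<in> {w. tword g c w \<in> K}" by simp
  qed
qed




lemma closed_shift:
  assumes "fv f = {}" "\<forall>w. satL w (\<lambda>_. 0) f \<longleftrightarrow> w \<in> K"
  shows "satL w s (shiftF k f) \<longleftrightarrow> w \<in> K"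
proof -
  have "satL w s (shiftF k f) \<longleftrightarrow> satL w (\<lambda>v. s (v+k)) f" by (rule satL_shiftF)
  also have "\<dots> \<longleftrightarrow> satL w (\<lambda>_. 0) f" by (rule satL_closed[OF assms(1)])
  finally show ?thesis using assms(2) by simp
qed

lemma rel_prefix:
  assumes f: "fv f = {}" "\<forall>w. satL w (\<lambda>_. 0) f \<longleftrightarrow> w \<in> K" and that: "p < length w"
  shows "satL w ((\<lambda>_. 0)(0 := p)) (relI None (Some 0) (shiftF 1 f)) \<longleftrightarrow> take p w \<in> K"
proof -
  have "satL w ((\<lambda>_. 0)(0 := p)) (relI None (Some 0) (shiftF 1 f)) \<longleftrightarrow>
    satL (take (en w ((\<lambda>_. 0)(0 := p)) (Some 0) - st ((\<lambda>_. 0)(0 := p)) None)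
         (drop (st ((\<lambda>_. 0)(0 := p)) None) w)) (\<lambda>v. ((\<lambda>_. 0)(0 := p)) v - st ((\<lambda>_. 0)(0 := p)) None) (shiftF 1 f)"
    by (rule satL_relI) (use f that in \<open>auto simp: bv_shiftF fv_shiftF st_def en_def\<close>)
  also have "\<dots> \<longleftrightarrow> take p w \<in> K"
    unfolding st_def en_def using closed_shift[OF f(1) f(2)] by simp
  finally show ?thesis .
qed

lemma FOL_prefix:
  assumes "FOL K"
  shows "FOL {w. c \<in> set w \<and> takeWhile (\<lambda>x. x \<noteq> c) w \<in> K}"
proof -
  obtain f where f: "fv f = {}" "\<forall>w. satL w (\<lambda>_. 0) f \<longleftrightarrow> w \<in> K" using assms unfolding FOL_def by blast
  define F where "F = FEx 0 (FConj (FLetter c 0) (FConj (FNeg (FEx 1 (FConj (FLess 1 0) (FLetter c 1))))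
       (relI None (Some 0) (shiftF 1 f))))"
  show ?thesis
  proof (rule FOL_I[of F])
    show "fv F = {}" unfolding F_def using fv_relI[of None "Some 0" "shiftF 1 f"] f(1)
      by (auto simp: fv_shiftF)
  next
    fix w
    have rel: "satL w ((\<lambda>_. 0)(0 := p)) (relI None (Some 0) (shiftF 1 f)) \<longleftrightarrow> take p w \<in> K"
      if "p < length w" for p using rel_prefix[OF f(1) f(2) that] .
    define R where "R = relI None (Some 0) (shiftF 1 f)"
    define N where "N = (FNeg (FEx 1 (FConj (FLess 1 0) (FLetter c 1))) :: 'a fo)"
    have Fe: "F = FEx 0 (FConj (FLetter c 0) (FConj N R))" unfolding F_def N_def R_def ..
    have Nsem: "satL w ((\<lambda>_. 0)(0 := p)) N \<longleftrightarrow> (\<forall>z<p. w ! z \<noteq> c)" if "p < length w" for p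
    proof -
      have "satL w ((\<lambda>_. 0)(0 := p)) N \<longleftrightarrow> \<not> (\<exists>z<length w. z < p \<and> w ! z = c)"
        unfolding N_def by simp
      also have "\<dots> \<longleftrightarrow> (\<forall>z<p. w ! z \<noteq> c)" using that by auto
      finally show ?thesis .
    qed
    show "satL w (\<lambda>_. 0) F \<longleftrightarrow> w \<in> {w. c \<in> set w \<and> takeWhile (\<lambda>x. x \<noteq> c) w \<in> K}"
    proof
      assume "satL w (\<lambda>_. 0) F"
      then obtain p where p0: "p < length w" and sp: "satL w ((\<lambda>_. 0)(0 := p)) (FConj (FLetter c 0) (FConj N R))"
        unfolding Fe satL.simps(6) by blast
      have c1: "w ! p = c" using sp by simp
      have c2: "satL w ((\<lambda>_. 0)(0 := p)) N" using sp by (simp only: satL.simps)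
      have c3: "satL w ((\<lambda>_. 0)(0 := p)) R" using sp by (simp only: satL.simps)
      have p: "w ! p = c" "\<forall>z<p. w ! z \<noteq> c" "take p w \<in> K"
        using c1 c2 c3 Nsem[OF p0] rel[OF p0] unfolding R_def by blast+
      have "takeWhile (\<lambda>x. x \<noteq> c) w = take p w"
        by (rule takeWhile_eq_take_P_nth) (use p p0 in auto)
      then show "w \<in> {w. c \<in> set w \<and> takeWhile (\<lambda>x. x \<noteq> c) w \<in> K}"
        using p p0 nth_mem[OF p0] by simp
    next
      assume a: "w \<in> {w. c \<in> set w \<and> takeWhile (\<lambda>x. x \<noteq> c) w \<in> K}"
      then have ex: "\<exists>p. p < length w \<and> w ! p = c" by (auto simp: in_set_conv_nth)
      define p where "p = (LEAST p. p < length w \<and> w ! p = c)"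
      have p: "p < length w" "w ! p = c" using LeastI_ex[OF ex] unfolding p_def by auto
      have pm: "w ! z \<noteq> c" if "z < p" for z
      proof -
        have "\<not> (z < length w \<and> w ! z = c)" using that unfolding p_def by (rule not_less_Least)
        then show ?thesis using that p(1) by auto
      qed
      have "takeWhile (\<lambda>x. x \<noteq> c) w = take p w"
        by (rule takeWhile_eq_take_P_nth) (use p pm in auto)
      then have "take p w \<in> K" using a by simp
      then have d3: "satL w ((\<lambda>_. 0)(0 := p)) R" using rel[OF p(1)] unfolding R_def by blast
      have d2: "satL w ((\<lambda>_. 0)(0 := p)) N" using Nsem[OF p(1)] pm by blast
      have d1: "satL w ((\<lambda>_. 0)(0 := p)) (FLetter c 0)" using p by simp
      have "satL w ((\<lambda>_. 0)(0 := p)) (FConj (FLetter c 0) (FConj N R))"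
        using d1 d2 d3 by (simp only: satL.simps)
      then show "satL w (\<lambda>_. 0) F" unfolding Fe satL.simps(6) using p(1) by blast
    qed
  qed
qed


lemma FOL_len_ge: "FOL {w::'a list. n \<le> length w}"
proof (induction n)
  case 0
  then show ?case using FOL_UNIV by simp
next
  case (Suc n)
  from Suc.IH obtain f :: "'a fo" where f: "fv f = {}" "\<forall>w. satL w (\<lambda>_. 0) f \<longleftrightarrow> w \<in> {w. n \<le> length w}"
    unfolding FOL_def by (elim exE conjE) (rule that)
  define F where "F = FEx 0 (relI None (Some 0) (shiftF 1 f))"
  show ?case
  proof (rule FOL_I[of F])
    show "fv F = {}" unfolding F_def using fv_relI[of None "Some 0" "shiftF 1 f"] f(1)
      by (auto simp: fv_shiftF)
  next
    fix w
    have rel: "satL w ((\<lambda>_. 0)(0 := p)) (relI None (Some 0) (shiftF 1 f)) \<longleftrightarrow> n \<le> p"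
      if "p < length w" for p
    proof -
      have "satL w ((\<lambda>_. 0)(0 := p)) (relI None (Some 0) (shiftF 1 f)) \<longleftrightarrow>
        satL (take (en w ((\<lambda>_. 0)(0 := p)) (Some 0) - st ((\<lambda>_. 0)(0 := p)) None)
             (drop (st ((\<lambda>_. 0)(0 := p)) None) w)) (\<lambda>v. ((\<lambda>_. 0)(0 := p)) v - st ((\<lambda>_. 0)(0 := p)) None) (shiftF 1 f)"
        by (rule satL_relI) (use f that in \<open>auto simp: bv_shiftF fv_shiftF st_def en_def\<close>)
      also have "\<dots> \<longleftrightarrow> n \<le> p"
        unfolding satL_shiftF st_def en_def using satL_closed[OF f(1)] f(2) that by simp
      finally show ?thesis .
    qed
    show "satL w (\<lambda>_. 0) F \<longleftrightarrow> w \<in> {w. Suc n \<le> length w}"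
    proof
      assume "satL w (\<lambda>_. 0) F"
      then show "w \<in> {w. Suc n \<le> length w}" unfolding F_def using rel by auto
    next
      assume "w \<in> {w. Suc n \<le> length w}"
      then have "n < length w" "satL w ((\<lambda>_. 0)(0 := n)) (relI None (Some 0) (shiftF 1 f))" using rel by auto
      then show "satL w (\<lambda>_. 0) F" unfolding F_def by (auto simp del: fun_upd_apply)
    qed
  qed
qed

lemma FOL_len_eq: "FOL {w. length w = n}"
proof -
  have "{w. length w = n} = {w. n \<le> length w} \<inter> - {w. Suc n \<le> length w}" by auto
  then show ?thesis using FOL_Int FOL_compl FOL_len_ge by metis
qed

lemma FOL_len_in:
  assumes "finite Z" shows "FOL {w. length w \<in> Z}"
proof -
  have eq: "{w. length w \<in> Z} = (\<Union>n\<in>Z. {w. length w = n})" by auto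
  show ?thesis unfolding eq by (rule FOL_UN[OF assms]) (rule FOL_len_eq)
qed

section \<open>Reversal\<close>

fun revF :: "'a fo \<Rightarrow> 'a fo" where
  "revF (FLess x y) = FLess y x"
| "revF (FEq x y) = FEq x y"
| "revF (FLetter a x) = FLetter a x"
| "revF (FNeg f) = FNeg (revF f)"
| "revF (FConj f g) = FConj (revF f) (revF g)"
| "revF (FEx x f) = FEx x (revF f)"

lemma fv_revF: "fv (revF f) = fv f" by (induction f) auto

lemma satL_revF:
  assumes "\<forall>v\<in>fv f. s v < length w"
  shows "satL w s (revF f) \<longleftrightarrow> satL (rev w) (\<lambda>v. length w - Suc (s v)) f"
  using assms
proof (induction f arbitrary: s)
  case (FLess x y)
  then show ?case by auto
next
  case (FEq x y)
  then show ?case by auto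
next
  case (FLetter a x)
  then show ?case by (auto simp: rev_nth)
next
  case (FNeg f)
  then show ?case by auto
next
  case (FConj f g)
  then show ?case by auto
next
  case (FEx x f)
  let ?n = "length w"
  have eq: "\<And>p. (\<lambda>v. ?n - Suc ((s(x:=p)) v)) = (\<lambda>v. ?n - Suc (s v))(x := ?n - Suc p)" by auto
  have "satL w s (revF (FEx x f)) \<longleftrightarrow> (\<exists>p<?n. satL (rev w) ((\<lambda>v. ?n - Suc (s v))(x := ?n - Suc p)) f)"
  proof -
    have "satL w (s(x:=p)) (revF f) \<longleftrightarrow> satL (rev w) ((\<lambda>v. ?n - Suc (s v))(x := ?n - Suc p)) f"
      if "p < ?n" for p
    proof -
      have pre: "\<forall>v\<in>fv f. (s(x:=p)) v < length w" using FEx.prems that by auto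
      have "satL w (s(x:=p)) (revF f) \<longleftrightarrow> satL (rev w) (\<lambda>v. ?n - Suc ((s(x:=p)) v)) f"
        by (rule FEx.IH[OF pre])
      then show ?thesis by (simp only: eq)
    qed
    then show ?thesis by auto
  qed
  also have "\<dots> \<longleftrightarrow> (\<exists>q<?n. satL (rev w) ((\<lambda>v. ?n - Suc (s v))(x := q)) f)"
  proof
    assume "\<exists>p<?n. satL (rev w) ((\<lambda>v. ?n - Suc (s v))(x := ?n - Suc p)) f"
    then obtain p where "p < ?n" "satL (rev w) ((\<lambda>v. ?n - Suc (s v))(x := ?n - Suc p)) f" by blast
    then show "\<exists>q<?n. satL (rev w) ((\<lambda>v. ?n - Suc (s v))(x := q)) f"
      by (intro exI[of _ "?n - Suc p"]) auto
  next
    assume "\<exists>q<?n. satL (rev w) ((\<lambda>v. ?n - Suc (s v))(x := q)) f"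
    then obtain q where "q < ?n" "satL (rev w) ((\<lambda>v. ?n - Suc (s v))(x := q)) f" by blast
    then show "\<exists>p<?n. satL (rev w) ((\<lambda>v. ?n - Suc (s v))(x := ?n - Suc p)) f"
      by (intro exI[of _ "?n - Suc q"]) auto
  qed
  finally show ?case by simp
qed

lemma FOL_rev: "FOL K \<Longrightarrow> FOL {w. rev w \<in> K}"
proof -
  assume "FOL K"
  then obtain f where f: "fv f = {}" "\<forall>w. satL w (\<lambda>_. 0) f \<longleftrightarrow> w \<in> K" unfolding FOL_def by blast
  show ?thesis
  proof (rule FOL_I[of "revF f"])
    show "fv (revF f) = {}" using f by (simp add: fv_revF)
  next
    fix w
    show "satL w (\<lambda>_. 0) (revF f) \<longleftrightarrow> w \<in> {w. rev w \<in> K}"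
      using satL_revF[of f "\<lambda>_. 0" w] f satL_closed[OF f(1), of "rev w"] by simp
  qed
qed


definition pw :: "('m \<Rightarrow> 'm \<Rightarrow> 'm) \<Rightarrow> 'm \<Rightarrow> 'm \<Rightarrow> nat \<Rightarrow> 'm" where
  "pw mul one a n = (mul a ^^ n) one"

definition prodl :: "('m \<Rightarrow> 'm \<Rightarrow> 'm) \<Rightarrow> 'm \<Rightarrow> 'm list \<Rightarrow> 'm" where
  "prodl mul one w = foldr mul w one"

inductive_set clo :: "('m \<Rightarrow> 'm \<Rightarrow> 'm) \<Rightarrow> ('m \<Rightarrow> 'm) \<Rightarrow> 'm set \<Rightarrow> 'm set"
  for mul sh A where
  cbase: "a \<in> A \<Longrightarrow> a \<in> clo mul sh A"
| cmul: "a \<in> clo mul sh A \<Longrightarrow> b \<in> clo mul sh A \<Longrightarrow> mul a b \<in> clo mul sh A"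
| csh: "a \<in> clo mul sh A \<Longrightarrow> sh a \<in> clo mul sh A"

definition Pl :: "'m set \<Rightarrow> 'm list set" where
  "Pl A = {w. w \<noteq> [] \<and> set w \<subseteq> A}"

definition approx where
  "approx le mul one sh A R \<longleftrightarrow>
     (\<forall>w\<in>Pl A. le (prodl mul one w) (R w) \<and> R w \<in> clo mul sh A) \<and>
     (\<forall>m. FOL {w\<in>Pl A. R w = m})"

lemma pw_0[simp]: "pw mul one a 0 = one" by (simp add: pw_def)
lemma pw_Suc: "pw mul one a (Suc n) = mul a (pw mul one a n)" by (simp add: pw_def)
lemma prodl_Nil[simp]: "prodl mul one [] = one" by (simp add: prodl_def)
lemma prodl_Cons[simp]: "prodl mul one (x # w) = mul x (prodl mul one w)" by (simp add: prodl_def)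

lemma clo_mono: assumes "A \<subseteq> B" shows "clo mul sh A \<subseteq> clo mul sh B"
proof
  fix x assume "x \<in> clo mul sh A"
  then show "x \<in> clo mul sh B" by (induction rule: clo.induct) (use assms in \<open>auto intro: clo.intros\<close>)
qed

lemma clo_sub:
  assumes "A \<subseteq> C" "\<And>a b. a \<in> C \<Longrightarrow> b \<in> C \<Longrightarrow> mul a b \<in> C" "\<And>a. a \<in> C \<Longrightarrow> sh a \<in> C"
  shows "clo mul sh A \<subseteq> C"
proof
  fix x assume "x \<in> clo mul sh A"
  then show "x \<in> C" by (induction rule: clo.induct) (use assms in auto)
qed

lemma clo_rev: "clo (\<lambda>a b. mul b a) sh A = clo mul sh A"
proof
  show "clo (\<lambda>a b. mul b a) sh A \<subseteq> clo mul sh A"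
    by (rule clo_sub) (auto intro: clo.intros)
  show "clo mul sh A \<subseteq> clo (\<lambda>a b. mul b a) sh A"
  proof (rule clo_sub)
    fix a b assume "a \<in> clo (\<lambda>a b. mul b a) sh A" "b \<in> clo (\<lambda>a b. mul b a) sh A"
    then show "mul a b \<in> clo (\<lambda>a b. mul b a) sh A"
      using clo.cmul[of b "\<lambda>a b. mul b a" sh A a] by simp
  qed (auto intro: clo.intros)
qed

lemma FOL_Pl: "FOL (Pl (A::'a::finite set))"
proof -
  have "Pl A = {w. 1 \<le> length w} \<inter> {w. set w \<subseteq> A}" unfolding Pl_def by (auto simp: Suc_le_eq)
  then show ?thesis using FOL_Int[OF FOL_len_ge FOL_content] by simp
qed

locale gm =
  fixes le :: "'m::finite \<Rightarrow> 'm \<Rightarrow> bool" and mul :: "'m \<Rightarrow> 'm \<Rightarrow> 'm" and one :: 'm and sh :: "'m \<Rightarrow> 'm"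
  assumes refl: "le x x"
    and trans: "le x y \<Longrightarrow> le y z \<Longrightarrow> le x z"
    and assoc: "mul (mul a b) c = mul a (mul b c)"
    and lunit: "mul one a = a"
    and runit: "mul a one = a"
    and mono: "le a a' \<Longrightarrow> le b b' \<Longrightarrow> le (mul a b) (mul a' b')"
    and shm: "sh (mul a b) = mul a (mul (sh (mul b a)) b)"
    and shpow: "\<exists>N. \<forall>n\<ge>N. le (pw mul one a n) (sh a)"
begin

abbreviation "P \<equiv> prodl mul one"
abbreviation "pow \<equiv> pw mul one"
abbreviation "cl \<equiv> clo mul sh"

lemma sh_left: "mul a (sh a) = sh a"
  using shm[of a one] by (simp add: lunit runit)

lemma sh_right: "mul (sh a) a = sh a"
  using shm[of one a] by (simp add: lunit runit)

lemma prodl_append: "P (u @ v) = mul (P u) (P v)"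
  by (induction u) (auto simp: lunit assoc)

lemma prodl_concat: "P (concat ws) = P (map P ws)"
  by (induction ws) (auto simp: prodl_append)

lemma prodl_mono: "list_all2 le u v \<Longrightarrow> le (P u) (P v)"
  by (induction rule: list_all2_induct) (auto intro: mono refl)

lemma pw_add: "pow a (m + n) = mul (pow a m) (pow a n)"
  by (induction m) (auto simp: pw_Suc lunit assoc)

lemma pw_Suc': "pow a (Suc n) = mul (pow a n) a"
  using pw_add[of a n 1] by (simp add: pw_Suc runit)

lemma prodl_replicate: "P (replicate n a) = pow a n"
  by (induction n) (auto simp: pw_Suc)

lemma pw_mono: "le a b \<Longrightarrow> le (pow a n) (pow b n)"
  by (induction n) (auto simp: pw_Suc intro: mono refl)

lemma pw_idem: "mul e e = e \<Longrightarrow> n \<ge> 1 \<Longrightarrow> pow e n = e"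
proof (induction n)
  case (Suc n)
  then show ?case by (cases n) (auto simp: pw_Suc runit)
qed simp


lemma pw_in_clo: "a \<in> cl A \<Longrightarrow> n \<ge> 1 \<Longrightarrow> pow a n \<in> cl A"
proof (induction n)
  case (Suc n)
  then show ?case by (cases n) (auto simp: pw_Suc runit intro: clo.intros)
qed simp

lemma prodl_in_clo: "w \<noteq> [] \<Longrightarrow> set w \<subseteq> cl A \<Longrightarrow> P w \<in> cl A"
proof (induction w)
  case (Cons x w)
  then show ?case by (cases w) (auto simp: runit intro: clo.intros)
qed simp

lemma idem_power_large:
  shows "\<exists>n\<ge>N. n \<ge> 1 \<and> mul (pow a n) (pow a n) = pow a n"
proof -
  have "\<not> inj_on (pow a) {0..card (UNIV::'m set)}"
  proof
    assume "inj_on (pow a) {0..card (UNIV::'m set)}"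
    then have "card (pow a ` {0..card (UNIV::'m set)}) = Suc (card (UNIV::'m set))" by (simp add: card_image)
    moreover have "card (pow a ` {0..card (UNIV::'m set)}) \<le> card (UNIV::'m set)" by (rule card_mono) auto
    ultimately show False by simp
  qed
  then obtain x y where xy: "x \<noteq> y" "pow a x = pow a y" unfolding inj_on_def by blast
  have "\<exists>i j. i < j \<and> pow a i = pow a j"
  proof (cases "x < y")
    case True
    then show ?thesis using xy by blast
  next
    case False
    then have "y < x" using xy(1) by simp
    then show ?thesis using xy by (intro exI[of _ y] exI[of _ x]) simp
  qed
  then obtain i j where ij: "i < j" "pow a i = pow a j" by blast
  define p where "p = j - i"
  have p: "p \<ge> 1" "pow a (i + p) = pow a i" using ij unfolding p_def by auto
  have per: "pow a (t + k * p) = pow a t" if "t \<ge> i" for t k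
  proof (induction k)
    case (Suc k)
    have "pow a (t + Suc k * p) = mul (pow a (t - i)) (pow a (i + p + k * p))"
      using that pw_add[of a "t - i" "i + p + k * p"] by (simp add: algebra_simps)
    also have "\<dots> = mul (pow a (t - i)) (mul (pow a (i + p)) (pow a (k * p)))" by (simp add: pw_add)
    also have "\<dots> = mul (pow a (t - i)) (mul (pow a i) (pow a (k * p)))" using p by simp
    also have "\<dots> = pow a (t + k * p)" using that by (simp add: pw_add[symmetric] assoc)
    finally show ?case using Suc by simp
  qed simp
  define n where "n = p * (N + i + 1)"
  have "1 * (N + i + 1) \<le> p * (N + i + 1)" by (rule mult_le_mono1[OF p(1)])
  then have n1: "n \<ge> N" "n \<ge> 1" "n \<ge> i" unfolding n_def by simp_all
  have "mul (pow a n) (pow a n) = pow a (n + (N + i + 1) * p)" by (simp add: pw_add n_def mult.commute)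
  also have "\<dots> = pow a n" using per[OF n1(3)] .
  finally show ?thesis using n1 by blast
qed

end


lemma cps_Cons: "cps (x # u) c = (if x = c then 0 # map Suc (cps u c) else map Suc (cps u c))"
proof -
  have "[0..<Suc (length u)] = 0 # [Suc 0..<Suc (length u)]" by (rule upt_conv_Cons) simp
  then have "[0..<length (x # u)] = 0 # map Suc [0..<length u]" by (simp add: map_Suc_upt)
  then show ?thesis unfolding cps_def by (simp add: filter_map comp_def)
qed

lemma blk_Cons_Suc: "blk (x # u) c (Suc p) = blk u c p"
  by (simp add: blk_def)

lemma blk_Cons_0: "blk (c # u) c 0 = takeWhile (\<lambda>x. x \<noteq> c) u"
  by (simp add: blk_def)

lemma decomp: "u = takeWhile (\<lambda>x. x \<noteq> c) u @ concat (map (\<lambda>p. c # blk u c p) (cps u c))"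
proof (induction u)
  case Nil
  then show ?case by (simp add: cps_def)
next
  case (Cons x u)
  have m: "((\<lambda>p. c # blk (x # u) c p) \<circ> Suc) = (\<lambda>p. c # blk u c p)"
    by (simp add: fun_eq_iff blk_Cons_Suc)
  show ?case
  proof (cases "x = c")
    case True
    then show ?thesis using m Cons.IH[symmetric] by (simp add: cps_Cons blk_Cons_0)
  next
    case False
    then show ?thesis using m Cons.IH[symmetric] by (simp add: cps_Cons)
  qed
qed

lemma blk_set: "set (blk u c p) \<subseteq> set u - {c}"
proof
  fix x assume "x \<in> set (blk u c p)"
  then have "x \<in> set (drop (Suc p) u) \<and> x \<noteq> c" unfolding blk_def by (rule set_takeWhileD)
  then show "x \<in> set u - {c}" by (auto dest: in_set_dropD)
qed

lemma pre_set: "set (takeWhile (\<lambda>x. x \<noteq> c) u) \<subseteq> set u - {c}"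
  by (auto dest: set_takeWhileD)

lemma cps_nonempty: "c \<in> set u \<Longrightarrow> cps u c \<noteq> []"
  unfolding cps_def by (auto simp: in_set_conv_nth filter_empty_conv)

lemma list_all2_mapI: "(\<And>x. x \<in> set xs \<Longrightarrow> r (f x) (h x)) \<Longrightarrow> list_all2 r (map f xs) (map h xs)"
  by (induction xs) auto

context gm
begin

lemma base_case:
  assumes A: "A = {a}"
  shows "\<exists>R. approx le mul one sh A R"
proof -
  obtain N where N: "\<forall>n\<ge>N. le (pow a n) (sh a)" using shpow by blast
  define R where "R w = (if length w < N then pow a (length w) else sh a)" for w :: "'m list"
  have aA: "a \<in> cl A" using A by (auto intro: clo.intros)
  have Pw: "P w = pow a (length w)" if "w \<in> Pl A" for w
  proof -
    have "replicate (length w) a = w" using that A unfolding Pl_def by (intro replicate_length_same) auto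
    then show ?thesis using prodl_replicate[of "length w" a] by simp
  qed
  have part1: "le (P w) (R w) \<and> R w \<in> cl A" if "w \<in> Pl A" for w
  proof -
    have "length w \<ge> 1" using that unfolding Pl_def by (cases w) auto
    show ?thesis
    proof (cases "length w < N")
      case True
      then show ?thesis using Pw[OF that] pw_in_clo[OF aA \<open>length w \<ge> 1\<close>] refl unfolding R_def by simp
    next
      case False
      then show ?thesis using Pw[OF that] N clo.csh[OF aA] unfolding R_def by simp
    qed
  qed
  have part2: "FOL {w\<in>Pl A. R w = m}" for m
  proof -
    define Z where "Z = {n. n < N \<and> pow a n = m}"
    have "{w\<in>Pl A. R w = m} = Pl A \<inter> ({w. length w \<in> Z} \<union> (if sh a = m then {w. N \<le> length w} else {}))"
      unfolding R_def Z_def by auto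
    moreover have "FOL (Pl A \<inter> ({w. length w \<in> Z} \<union> (if sh a = m then {w. N \<le> length w} else {})))"
      by (intro FOL_Int FOL_Un FOL_Pl FOL_len_in) (auto simp: Z_def intro: FOL_len_ge FOL_empty)
    ultimately show ?thesis by simp
  qed
  show ?thesis using part1 part2 unfolding approx_def by blast
qed

end

context gm
begin
lemma iter_l:
  assumes "a = mul (mul a a) p"
  shows "a = mul (pow a (Suc k)) (pow p k)"
proof (induction k)
  case 0
  then show ?case by (simp add: pw_Suc runit)
next
  case (Suc k)
  have "a = mul (pow a k) (mul a (pow p k))" using Suc by (simp add: pw_Suc' assoc)
  also have "mul a (pow p k) = mul (mul (mul a a) p) (pow p k)"
    using assms by (rule arg_cong[where f="\<lambda>x. mul x (pow p k)"])
  finally have fin: "a = mul (pow a k) (mul (mul (mul a a) p) (pow p k))" .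
  have e1: "pow a (Suc (Suc k)) = mul (pow a k) (mul a a)"
    using pw_add[of a k 2] by (simp add: pw_Suc runit numeral_2_eq_2)
  have e2: "pow p (Suc k) = mul p (pow p k)" by (rule pw_Suc)
  show ?case unfolding e1 e2 using fin by (simp add: assoc)
qed

lemma iter_r:
  assumes "a = mul q (mul a a)"
  shows "a = mul (pow q k) (pow a (Suc k))"
proof (induction k)
  case 0
  then show ?case by (simp add: pw_Suc runit lunit)
next
  case (Suc k)
  have "a = mul (mul (pow q k) a) (pow a k)" using Suc by (simp add: pw_Suc assoc)
  also have "mul (pow q k) a = mul (pow q k) (mul q (mul a a))"
    using assms by (rule arg_cong[where f="\<lambda>x. mul (pow q k) x"])
  finally have fin: "a = mul (mul (pow q k) (mul q (mul a a))) (pow a k)" .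
  have e1: "pow a (Suc (Suc k)) = mul (mul a a) (pow a k)"
    using pw_add[of a 2 k] by (simp add: pw_Suc runit numeral_2_eq_2)
  have e2: "pow q (Suc k) = mul (pow q k) q" by (rule pw_Suc')
  show ?case unfolding e1 e2 using fin by (simp add: assoc)
qed

lemma stuck_case:
  assumes A2: "card A \<ge> 2"
    and Lc: "\<forall>c\<in>A. insert c (mul c ` cl A) = cl A"
    and Rc: "\<forall>c\<in>A. insert c ((\<lambda>s. mul s c) ` cl A) = cl A"
  shows "\<exists>R. approx le mul one sh A R"
proof -
  have AS: "A \<subseteq> cl A" by (auto intro: clo.intros)
  have other: "\<exists>b\<in>A. b \<noteq> a" if "a \<in> A" for a
  proof (rule ccontr)
    assume "\<not> (\<exists>b\<in>A. b \<noteq> a)"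
    then have "A \<subseteq> {a}" by auto
    then have "card A \<le> card {a}" by (intro card_mono) auto
    then have "card A \<le> 1" by simp
    then show False using A2 by simp
  qed
  have dl: "\<exists>x\<in>cl A. a = mul b x" if "a \<in> A" "b \<in> A" "a \<noteq> b" for a b
  proof -
    have "a \<in> insert b (mul b ` cl A)" using Lc that AS by auto
    then show ?thesis using that by auto
  qed
  have dr: "\<exists>x\<in>cl A. a = mul x b" if "a \<in> A" "b \<in> A" "a \<noteq> b" for a b
  proof -
    have "a \<in> insert b ((\<lambda>s. mul s b) ` cl A)" using Rc that AS by auto
    then show ?thesis using that by auto
  qed
  have lp: "\<exists>p. a = mul (mul a a) p" if aA: "a \<in> A" for a
  proof -
    obtain b where b: "b \<in> A" "b \<noteq> a" using other[OF aA] by blast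
    obtain x where x: "x \<in> cl A" "a = mul b x" using dl[OF aA b(1)] b(2) by auto
    obtain y where y: "y \<in> cl A" "b = mul a y" using dl[OF b(1) aA b(2)] by auto
    have a1: "a = mul a (mul y x)" using x y by (simp add: assoc)
    have m: "mul y x \<in> cl A" by (rule clo.cmul[OF y(1) x(1)])
    have "mul y x \<in> insert a (mul a ` cl A)" using m bspec[OF Lc aA] by simp
    then show ?thesis
    proof
      assume "mul y x = a"
      then show ?thesis using a1 by (intro exI[of _ one]) (simp add: runit)
    next
      assume "mul y x \<in> mul a ` cl A"
      then obtain z where "mul y x = mul a z" by auto
      then show ?thesis using a1 by (intro exI[of _ z]) (simp add: assoc)
    qed
  qed
  have rp: "\<exists>q. a = mul q (mul a a)" if aA: "a \<in> A" for a
  proof -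
    obtain b where b: "b \<in> A" "b \<noteq> a" using other[OF aA] by blast
    obtain x where x: "x \<in> cl A" "a = mul x b" using dr[OF aA b(1)] b(2) by auto
    obtain y where y: "y \<in> cl A" "b = mul y a" using dr[OF b(1) aA b(2)] by auto
    have a1: "a = mul (mul x y) a" using x y by (simp add: assoc)
    have m: "mul x y \<in> cl A" by (rule clo.cmul[OF x(1) y(1)])
    have "mul x y \<in> insert a ((\<lambda>s. mul s a) ` cl A)" using m bspec[OF Rc aA] by simp
    then show ?thesis
    proof
      assume "mul x y = a"
      then show ?thesis using a1 by (intro exI[of _ one]) (simp add: lunit)
    next
      assume "mul x y \<in> (\<lambda>s. mul s a) ` cl A"
      then obtain z where "mul x y = mul z a" by auto
      then show ?thesis using a1 by (intro exI[of _ z]) (simp add: assoc)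
    qed
  qed
  have "\<forall>x. \<exists>n. n \<ge> 1 \<and> mul (pow x n) (pow x n) = pow x n \<and> le (pow x n) (sh x)"
  proof
    fix x
    obtain N where N: "\<forall>n\<ge>N. le (pow x n) (sh x)" using shpow by blast
    obtain n where "n \<ge> N" "n \<ge> 1" "mul (pow x n) (pow x n) = pow x n" using idem_power_large[of N x] by blast
    then show "\<exists>n. n \<ge> 1 \<and> mul (pow x n) (pow x n) = pow x n \<and> le (pow x n) (sh x)" using N by blast
  qed
  from choice[OF this] obtain nf where nf0: "\<forall>x. nf x \<ge> 1 \<and> mul (pow x (nf x)) (pow x (nf x)) = pow x (nf x) \<and> le (pow x (nf x)) (sh x)"
    by blast
  then have nf: "nf x \<ge> 1 \<and> mul (pow x (nf x)) (pow x (nf x)) = pow x (nf x) \<and> le (pow x (nf x)) (sh x)" for x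
    by blast
  define ee where "ee x = pow x (nf x)" for x
  have ee_idem: "mul (ee x) (ee x) = ee x" for x using nf unfolding ee_def by blast
  have ee_le: "le (ee x) (sh x)" for x using nf unfolding ee_def by blast
  have ee_Suc: "\<exists>m. ee x = pow x (Suc m)" for x using nf[of x] unfolding ee_def
    by (intro exI[of _ "nf x - 1"]) simp
  have el: "mul (ee a) a = a" if aA: "a \<in> A" for a
  proof -
    obtain p where p: "a = mul (mul a a) p" using lp[OF aA] by blast
    have a2: "a = mul (mul (ee a) a) (pow p (nf a))"
      using iter_l[OF p, of "nf a"] unfolding ee_def by (simp add: pw_Suc')
    have "mul (ee a) a = mul (mul (ee a) (ee a)) (mul a (pow p (nf a)))"
      by (subst a2) (simp add: assoc)
    also have "\<dots> = a" using a2 ee_idem by (simp add: assoc)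
    finally show ?thesis .
  qed
  have er: "mul a (ee a) = a" if aA: "a \<in> A" for a
  proof -
    obtain q where q: "a = mul q (mul a a)" using rp[OF aA] by blast
    have a2: "a = mul (pow q (nf a)) (mul a (ee a))"
      using iter_r[OF q, of "nf a"] unfolding ee_def by (simp add: pw_Suc)
    have "mul a (ee a) = mul (mul (pow q (nf a)) a) (mul (ee a) (ee a))"
      by (subst a2) (simp add: assoc)
    also have "\<dots> = a" using a2 ee_idem by (simp add: assoc)
    finally show ?thesis .
  qed
  have eyl: "mul (ee y) x = x" if xyA: "x \<in> A" "y \<in> A" for x y
  proof (cases "x = y")
    case True then show ?thesis using el xyA by simp
  next
    case False
    obtain z where "x = mul y z" using dl[OF xyA False] by blast
    then show ?thesis using el[OF xyA(2)] by (simp add: assoc[symmetric])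
  qed
  have eyr: "mul x (ee y) = x" if xyA: "x \<in> A" "y \<in> A" for x y
  proof (cases "x = y")
    case True then show ?thesis using er xyA by simp
  next
    case False
    obtain z where "x = mul z y" using dr[OF xyA False] by blast
    then show ?thesis using er[OF xyA(2)] by (simp add: assoc)
  qed
  have ee_eq: "ee x = ee y" if "x \<in> A" "y \<in> A" for x y
  proof -
    obtain m where m: "ee x = pow x (Suc m)" using ee_Suc by blast
    obtain k where k: "ee y = pow y (Suc k)" using ee_Suc by blast
    have "mul (ee y) (ee x) = ee x" unfolding m
      by (simp add: pw_Suc assoc[symmetric] eyl[OF that])
    moreover have "mul (ee y) (ee x) = ee y" unfolding k
      by (simp add: pw_Suc' assoc eyr[OF that(2,1)])
    ultimately show ?thesis by simp
  qed
  have Ane: "A \<noteq> {}" using A2 by auto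
  then obtain a0 where a0: "a0 \<in> A" by blast
  define e where "e = ee a0"
  have eA: "mul e x = x" "mul x e = x" "le e (sh x)" if "x \<in> A" for x
    using eyl[OF that a0] eyr[OF that a0] ee_le[of x] ee_eq[OF that a0] unfolding e_def by auto
  have ee: "mul e e = e" unfolding e_def by (rule ee_idem)
  have esh: "mul e (sh x) = sh x" "mul (sh x) e = sh x" if "x \<in> A" for x
  proof -
    have "mul e (sh x) = mul (mul e x) (sh x)" using sh_left[of x] by (simp add: assoc)
    then show "mul e (sh x) = sh x" using eA[OF that] sh_left[of x] by simp
    have "mul (sh x) e = mul (sh x) (mul x e)" using sh_right[of x] by (simp add: assoc[symmetric])
    then show "mul (sh x) e = sh x" using eA[OF that] sh_right[of x] by simp
  qed
  have xsh: "le x (sh x)" if "x \<in> A" for x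
  proof -
    have "le (mul e x) (mul (sh x) x)" by (rule mono[OF eA(3)[OF that] refl])
    then show ?thesis using eA[OF that] sh_right[of x] by simp
  qed
  have lst: "le e (P (map sh L)) \<and> (\<forall>x\<in>set L. le (sh x) (P (map sh L))) \<and> mul (P (map sh L)) e = P (map sh L)"
    if "L \<noteq> []" "set L \<subseteq> A" for L
    using that
  proof (induction L)
    case Nil then show ?case by simp
  next
    case (Cons y L')
    show ?case
    proof (cases "L' = []")
      case True
      then show ?thesis using Cons.prems eA esh by (simp add: runit refl)
    next
      case False
      define Q where "Q = P (map sh L')"
      have IH: "le e Q" "\<forall>x\<in>set L'. le (sh x) Q" "mul Q e = Q"
        using Cons.IH[OF False] Cons.prems unfolding Q_def by auto
      have yA: "y \<in> A" using Cons.prems by simp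
      have 1: "le e (mul (sh y) Q)" using mono[OF eA(3)[OF yA] IH(1)] ee by simp
      have 2: "le (sh y) (mul (sh y) Q)" using mono[OF refl IH(1), of "sh y"] esh[OF yA] by simp
      have 3: "le (sh x) (mul (sh y) Q)" if "x \<in> set L'" for x
        using mono[OF eA(3)[OF yA] IH(2)[rule_format, OF that]] esh[of x] that Cons.prems by auto
      have 4: "mul (mul (sh y) Q) e = mul (sh y) Q" using IH(3) by (simp add: assoc)
      show ?thesis using 1 2 3 4 unfolding Q_def by simp
    qed
  qed
  obtain as where as: "set as = A" using finite_list[of A] by auto
  have asne: "as \<noteq> []" using as Ane by auto
  define E where "E = P (map sh as)"
  have EL: "le e E" "\<And>x. x \<in> A \<Longrightarrow> le (sh x) E" "mul E e = E"
    using lst[OF asne] as unfolding E_def by auto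
  have xE: "le x E" if "x \<in> A" for x using trans[OF xsh[OF that] EL(2)[OF that]] .
  have wE: "le (P w) (pow E (length w))" if "set w \<subseteq> A" for w
    using that by (induction w) (auto simp: pw_Suc refl intro: mono xE)
  obtain NE where NE: "\<forall>n\<ge>NE. le (pow E n) (sh E)" using shpow by blast
  have powE: "le (pow E (Suc n)) (sh E)" for n
  proof -
    have "mul (pow E (Suc n)) e = pow E (Suc n)" using EL(3) by (simp add: pw_Suc' assoc)
    moreover have "le e (pow E (Suc NE))"
    proof -
      have "le (pow e (Suc NE)) (pow E (Suc NE))" by (rule pw_mono[OF EL(1)])
      then show ?thesis using pw_idem[OF ee, of "Suc NE"] by simp
    qed
    then have m1: "le (mul (pow E (Suc n)) e) (mul (pow E (Suc n)) (pow E (Suc NE)))"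
      by (intro mono refl)
    have h1: "le (pow E (Suc n)) (pow E (Suc n + Suc NE))" using m1 \<open>mul (pow E (Suc n)) e = pow E (Suc n)\<close>
      pw_add[of E "Suc n" "Suc NE"] by simp
    have h2: "le (pow E (Suc n + Suc NE)) (sh E)" using NE by simp
    show ?thesis by (rule trans[OF h1 h2])
  qed
  have Ecl: "E \<in> cl A" unfolding E_def using asne as AS by (intro prodl_in_clo) (auto intro: clo.intros)
  define R where "R w = sh E" for w :: "'m list"
  have part1: "le (P w) (R w) \<and> R w \<in> cl A" if wP: "w \<in> Pl A" for w
  proof -
    obtain n where n: "length w = Suc n" using wP unfolding Pl_def by (cases w) auto
    have "le (P w) (pow E (Suc n))" using wE[of w] wP n unfolding Pl_def by simp
    then have "le (P w) (sh E)" using powE[of n] by (rule trans)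
    then show ?thesis using clo.csh[OF Ecl] unfolding R_def by simp
  qed
  have part2: "FOL {w\<in>Pl A. R w = m}" for m
  proof (cases "sh E = m")
    case True
    then have eq: "{w\<in>Pl A. R w = m} = Pl A" unfolding R_def by auto
    show ?thesis unfolding eq by (rule FOL_Pl)
  next
    case False
    then have eq: "{w\<in>Pl A. R w = m} = {}" unfolding R_def by auto
    show ?thesis unfolding eq by (rule FOL_empty)
  qed
  show ?thesis using part1 part2 unfolding approx_def by blast
qed

end


context gm
begin

lemma left_red:
  fixes A :: "'m set"
  assumes cA: "c \<in> A"
    and small: "card (insert c (mul c ` cl A)) < card (cl A)"
    and IH: "\<And>A'. card (cl A') < card (cl A) \<or> (card (cl A') = card (cl A) \<and> card A' < card A)
                 \<Longrightarrow> \<exists>R. approx le mul one sh A' R"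
  shows "\<exists>R. approx le mul one sh A R"
proof -
  define B where "B = A - {c}"
  have clB: "cl B \<subseteq> cl A" unfolding B_def by (rule clo_mono) auto
  have c1: "card (cl B) \<le> card (cl A)" by (rule card_mono[OF _ clB]) simp
  have c2: "card B < card A" unfolding B_def by (rule card_Diff1_less[OF _ cA]) simp
  have "card (cl B) < card (cl A) \<or> (card (cl B) = card (cl A) \<and> card B < card A)" using c1 c2 by auto
  then obtain RB where RB: "approx le mul one sh B RB" using IH by blast
  have RBp: "le (P w) (RB w) \<and> RB w \<in> cl B" if "w \<in> Pl B" for w
    using RB that unfolding approx_def by blast
  define C where "C = insert c (mul c ` cl A)"
  have cAcl: "c \<in> cl A" using cA by (rule clo.cbase)
  have Cform: "\<exists>x. a = mul c x \<and> (x = one \<or> x \<in> cl A)" if "a \<in> C" for a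
  proof (cases "a = c")
    case True
    then show ?thesis by (intro exI[of _ one]) (simp add: runit)
  next
    case False
    then show ?thesis using that unfolding C_def by auto
  qed
  have CA: "C \<subseteq> cl A" unfolding C_def using cAcl by (auto intro: clo.cmul)
  have mulin: "mul x y \<in> cl A" if "x = one \<or> x \<in> cl A" "y \<in> cl A" for x y
    using that by (auto simp: lunit intro: clo.cmul)
  have Cmul: "mul a b \<in> C" if ab: "a \<in> C" "b \<in> C" for a b
  proof -
    obtain x where x: "a = mul c x" "x = one \<or> x \<in> cl A" using Cform[OF ab(1)] by blast
    obtain y where y: "b = mul c y" "y = one \<or> y \<in> cl A" using Cform[OF ab(2)] by blast
    have "mul c y \<in> cl A" using y(2) cAcl by (auto simp: runit intro: clo.cmul)
    then have "mul x (mul c y) \<in> cl A" using mulin x(2) by blast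
    moreover have "mul a b = mul c (mul x (mul c y))" using x y by (simp add: assoc)
    ultimately show ?thesis unfolding C_def by blast
  qed
  have Csh: "sh a \<in> C" if aC: "a \<in> C" for a
  proof -
    obtain x where x: "a = mul c x" "x = one \<or> x \<in> cl A" using Cform[OF aC] by blast
    show ?thesis
    proof (cases "x = one")
      case True
      then have "sh a = mul c (sh c)" using x sh_left[of c] by (simp add: runit)
      then show ?thesis unfolding C_def using clo.csh[OF cAcl] by blast
    next
      case False
      then have xA: "x \<in> cl A" using x by simp
      have "sh a = mul c (mul (sh (mul x c)) x)" using x shm[of c x] by simp
      moreover have "mul (sh (mul x c)) x \<in> cl A"
        using xA cAcl by (intro clo.cmul clo.csh) auto
      ultimately show ?thesis unfolding C_def by blast
    qed
  qed
  define V where "V = RB ` Pl B"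
  have VclA: "V \<subseteq> cl A" using RBp clB unfolding V_def by auto
  define T where "T = insert c (mul c ` V)"
  have TC: "T \<subseteq> C" using VclA unfolding T_def C_def by auto
  have clTC: "cl T \<subseteq> C" by (rule clo_sub[OF TC Cmul Csh])
  have "card (cl T) \<le> card C" by (rule card_mono[OF _ clTC]) simp
  then have "card (cl T) < card (cl A)" using small unfolding C_def by simp
  then obtain RT where RT: "approx le mul one sh T RT" using IH by blast
  have RTp: "le (P w) (RT w) \<and> RT w \<in> cl T" if "w \<in> Pl T" for w
    using RT that unfolding approx_def by blast
  define g where "g v = (if v \<in> Pl B then mul c (RB v) else c)" for v :: "'m list"
  define tw where "tw u = tword g c u" for u
  define pre where "pre u = takeWhile (\<lambda>x. x \<noteq> c) u" for u :: "'m list"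
  define R where "R u = (if c \<notin> set u then RB u else if pre u = [] then RT (tw u)
                         else mul (RB (pre u)) (RT (tw u)))" for u
  have twP: "tw u \<in> Pl T" if "c \<in> set u" for u
  proof -
    have "g v \<in> T" for v unfolding g_def T_def V_def by auto
    then show ?thesis using cps_nonempty[OF that] unfolding tw_def tword_def Pl_def by auto
  qed
  have preB: "pre u \<in> Pl B" if "u \<in> Pl A" "pre u \<noteq> []" for u
    using that pre_set[of c u] unfolding pre_def Pl_def B_def by auto
  have blkB: "set (blk u c p) \<subseteq> B" if "u \<in> Pl A" for u p
    using that blk_set[of u c p] unfolding Pl_def B_def by auto
  have main_le: "le (P u) (R u) \<and> R u \<in> cl A" if uA: "u \<in> Pl A" for u
  proof (cases "c \<in> set u")
    case False
    then have "u \<in> Pl B" using uA unfolding Pl_def B_def by auto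
    then show ?thesis using RBp clB False unfolding R_def by auto
  next
    case True
    define bs where "bs = map (\<lambda>p. c # blk u c p) (cps u c)"
    have d: "pre u @ concat bs = u" using decomp[of u c, symmetric] unfolding pre_def bs_def .
    have Pu: "P u = mul (P (pre u)) (P (map P bs))"
    proof -
      have "P u = P (pre u @ concat bs)" by (simp only: d)
      also have "\<dots> = mul (P (pre u)) (P (map P bs))" by (simp add: prodl_append prodl_concat)
      finally show ?thesis .
    qed
    have mapP: "map P bs = map (\<lambda>p. mul c (P (blk u c p))) (cps u c)" unfolding bs_def by simp
    have la: "list_all2 le (map P bs) (tw u)"
      unfolding mapP tw_def tword_def
    proof (rule list_all2_mapI)
      fix p
      show "le (mul c (P (blk u c p))) (g (blk u c p))"
      proof (cases "blk u c p = []")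
        case True
        then show ?thesis unfolding g_def Pl_def by (simp add: runit refl)
      next
        case False
        then have "blk u c p \<in> Pl B" using blkB[OF uA] unfolding Pl_def by auto
        then show ?thesis unfolding g_def using RBp by (auto intro: mono refl)
      qed
    qed
    have tle: "le (P (map P bs)) (RT (tw u))"
      using trans[OF prodl_mono[OF la]] RTp[OF twP[OF True]] by blast
    have RTA: "RT (tw u) \<in> cl A" using RTp[OF twP[OF True]] clTC CA by blast
    show ?thesis
    proof (cases "pre u = []")
      case True
      then show ?thesis using Pu tle RTA \<open>c \<in> set u\<close> unfolding R_def by (simp add: lunit)
    next
      case False
      have pB: "pre u \<in> Pl B" using preB[OF uA False] .
      have "le (mul (P (pre u)) (P (map P bs))) (mul (RB (pre u)) (RT (tw u)))"
        using RBp[OF pB] tle by (intro mono) auto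
      moreover have "mul (RB (pre u)) (RT (tw u)) \<in> cl A"
        using RBp[OF pB] clB RTA by (intro clo.cmul) auto
      ultimately show ?thesis using Pu False \<open>c \<in> set u\<close> unfolding R_def by simp
    qed
  qed
  have FB: "FOL {w\<in>Pl B. RB w = x}" for x using RB unfolding approx_def by blast
  have FT: "FOL {w\<in>Pl T. RT w = x}" for x using RT unfolding approx_def by blast
  have Fg: "FOL {v. g v = a}" for a
  proof -
    have eq: "{v. g v = a} = (\<Union>x\<in>{x. mul c x = a}. {w\<in>Pl B. RB w = x}) \<union> (if a = c then - Pl B else {})"
      unfolding g_def by auto
    show ?thesis unfolding eq
      by (intro FOL_Un FOL_UN) (auto intro: FB FOL_compl FOL_Pl FOL_empty)
  qed
  have Ftw: "FOL {w. tw w \<in> K}" if "FOL K" for K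
    unfolding tw_def by (rule FOL_blocks[OF Fg that])
  have Fpre: "FOL {w. c \<in> set w \<and> pre w \<in> K}" if "FOL K" for K
    unfolding pre_def by (rule FOL_prefix[OF that])
  have part2: "FOL {w\<in>Pl A. R w = m}" for m
  proof -
    define L1 where "L1 = Pl A \<inter> - {w. c \<in> set w} \<inter> {w\<in>Pl B. RB w = m}"
    define L2 where "L2 = Pl A \<inter> {w. c \<in> set w \<and> pre w \<in> {v. length v \<in> {0}}} \<inter> {w. tw w \<in> {v\<in>Pl T. RT v = m}}"
    define L3 where "L3 = (\<Union>xy\<in>{xy. mul (fst xy) (snd xy) = m}.
        Pl A \<inter> {w. c \<in> set w \<and> pre w \<in> {v\<in>Pl B. RB v = fst xy}} \<inter> {w. tw w \<in> {v\<in>Pl T. RT v = snd xy}})"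
    have "FOL L1" unfolding L1_def
      by (intro FOL_Int FOL_Pl FOL_compl FOL_occ FB)
    moreover have "FOL L2" unfolding L2_def
      by (intro FOL_Int FOL_Pl Fpre Ftw FT FOL_len_in) simp
    moreover have "FOL L3" unfolding L3_def
      by (intro FOL_UN FOL_Int FOL_Pl Fpre Ftw FT FB) simp
    moreover have "{w\<in>Pl A. R w = m} = L1 \<union> L2 \<union> L3"
    proof (rule set_eqI)
      fix w
      show "w \<in> {w\<in>Pl A. R w = m} \<longleftrightarrow> w \<in> L1 \<union> L2 \<union> L3"
      proof (cases "w \<in> Pl A")
        case False
        then show ?thesis unfolding L1_def L2_def L3_def by auto
      next
        case wA: True
        show ?thesis
        proof (cases "c \<in> set w")
          case False
          then have "w \<in> Pl B" using wA unfolding Pl_def B_def by auto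
          then show ?thesis using False wA unfolding L1_def L2_def L3_def R_def by auto
        next
          case cw: True
          show ?thesis
          proof (cases "pre w = []")
            case True
            have "[] \<notin> Pl B" unfolding Pl_def by simp
            then show ?thesis using True cw wA twP[OF cw] unfolding L1_def L2_def L3_def R_def by auto
          next
            case False
            have "pre w \<in> Pl B" using preB[OF wA False] .
            then show ?thesis using False cw wA twP[OF cw] unfolding L1_def L2_def L3_def R_def by auto
          qed
        qed
      qed
    qed
    ultimately show ?thesis by (metis FOL_Un)
  qed
  show ?thesis using main_le part2 unfolding approx_def by blast
qed

end


context gm
begin

lemma pw_rev: "pw (\<lambda>a b. mul b a) one a n = pow a n"
proof (induction n)
  case (Suc n)
  have "pw (\<lambda>a b. mul b a) one a (Suc n) = mul (pw (\<lambda>a b. mul b a) one a n) a" by (simp add: pw_Suc)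
  then show ?case using Suc pw_Suc'[of a n] by simp
qed simp

lemma prodl_rev: "prodl (\<lambda>a b. mul b a) one w = P (rev w)"
  by (induction w) (auto simp: prodl_append runit)

lemma gm_rev: "gm le (\<lambda>a b. mul b a) one sh"
proof
  show "le x x" for x by (rule refl)
  show "le x y \<Longrightarrow> le y z \<Longrightarrow> le x z" for x y z by (rule trans)
  show "mul c (mul b a) = mul (mul c b) a" for a b c by (simp add: assoc)
  show "mul a one = a" for a by (rule runit)
  show "mul one a = a" for a by (rule lunit)
  show "le a a' \<Longrightarrow> le b b' \<Longrightarrow> le (mul b a) (mul b' a')" for a a' b b' by (rule mono)
  show "sh (mul b a) = mul (mul b (sh (mul a b))) a" for a b using shm[of b a] by (simp add: assoc)
  show "\<exists>N. \<forall>n\<ge>N. le (pw (\<lambda>a b. mul b a) one a n) (sh a)" for a using shpow[of a] by (simp add: pw_rev)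
qed

lemma rev_approx:
  assumes "approx le (\<lambda>a b. mul b a) one sh A R'"
  shows "approx le mul one sh A (\<lambda>w. R' (rev w))"
proof -
  have PlA: "rev w \<in> Pl A \<longleftrightarrow> w \<in> Pl A" for w unfolding Pl_def by auto
  have 1: "le (P w) (R' (rev w)) \<and> R' (rev w) \<in> cl A" if "w \<in> Pl A" for w
  proof -
    have h: "le (prodl (\<lambda>a b. mul b a) one (rev w)) (R' (rev w)) \<and> R' (rev w) \<in> clo (\<lambda>a b. mul b a) sh A"
      using assms PlA[of w] that unfolding approx_def by blast
    then show ?thesis by (simp add: prodl_rev clo_rev[of mul sh])
  qed
  have 2: "FOL {w\<in>Pl A. R' (rev w) = m}" for m
  proof -
    have "FOL {w. rev w \<in> {v\<in>Pl A. R' v = m}}"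
      using assms unfolding approx_def by (intro FOL_rev) blast
    moreover have "{w. rev w \<in> {v\<in>Pl A. R' v = m}} = {w\<in>Pl A. R' (rev w) = m}" using PlA by auto
    ultimately show ?thesis by simp
  qed
  show ?thesis using 1 2 unfolding approx_def by blast
qed

end

lemma arith_lex:
  fixes a a' b b' K :: nat
  assumes "a' < a" "b' \<le> K"
  shows "a' * Suc K + b' < a * Suc K + b"
proof -
  have "Suc a' * Suc K \<le> a * Suc K" using assms(1) by (intro mult_le_mono1) simp
  then show ?thesis using assms(2) by simp
qed

lemma main_list:
  fixes le :: "'m::finite \<Rightarrow> 'm \<Rightarrow> bool"
  assumes "gm le mul one sh"
  shows "\<exists>R. approx le mul one sh A R"
proof -
  define K where "K = card (UNIV :: 'm set)"
  have cardK: "card (X :: 'm set) \<le> K" for X unfolding K_def by (rule card_mono) auto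
  have "\<forall>mul (A :: 'm set). gm le mul one sh \<longrightarrow> card (clo mul sh A) * Suc K + card A = n
          \<longrightarrow> (\<exists>R. approx le mul one sh A R)" for n
  proof (induction n rule: less_induct)
    case (less n)
    show ?case
    proof (intro allI impI)
      fix mul and A :: "'m set"
      assume g: "gm le mul one sh" and mu: "card (clo mul sh A) * Suc K + card A = n"
      interpret gm le mul one sh by (rule g)
      have lessn: "card (cl A') * Suc K + card A' < n"
        if "card (cl A') < card (cl A) \<or> (card (cl A') = card (cl A) \<and> card A' < card A)" for A'
        using that
      proof
        assume a: "card (cl A') < card (cl A)"
        show ?thesis using arith_lex[OF a cardK[of A'], of "card A"] mu by simp
      next
        assume "card (cl A') = card (cl A) \<and> card A' < card A"
        then show ?thesis using mu by simp
      qed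
      have IH': "\<exists>R. approx le mul one sh A' R"
        if "card (cl A') < card (cl A) \<or> (card (cl A') = card (cl A) \<and> card A' < card A)" for A'
      proof -
        have "card (cl A') * Suc K + card A' < n" by (rule lessn[OF that])
        then show ?thesis using less.IH g by blast
      qed
      have gr: "gm le (\<lambda>a b. mul b a) one sh" by (rule gm_rev)
      have IHr: "\<exists>R. approx le (\<lambda>a b. mul b a) one sh A' R"
        if "card (clo (\<lambda>a b. mul b a) sh A') < card (clo (\<lambda>a b. mul b a) sh A) \<or>
            (card (clo (\<lambda>a b. mul b a) sh A') = card (clo (\<lambda>a b. mul b a) sh A) \<and> card A' < card A)" for A'
      proof -
        have "card (cl A') * Suc K + card A' < n" by (rule lessn) (use that in \<open>simp only: clo_rev[of mul sh]\<close>)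
        then have "card (clo (\<lambda>a b. mul b a) sh A') * Suc K + card A' < n" by (simp only: clo_rev[of mul sh])
        then show ?thesis using less.IH gr by blast
      qed
      have sub1: "insert c (mul c ` cl A) \<subseteq> cl A" if "c \<in> A" for c
        using that by (auto intro: clo.intros)
      have sub2: "insert c ((\<lambda>s. mul s c) ` cl A) \<subseteq> cl A" if "c \<in> A" for c
        using that by (auto intro: clo.intros)
      show "\<exists>R. approx le mul one sh A R"
      proof (cases "A = {}")
        case True
        have "Pl A = {}" using True unfolding Pl_def by auto
        then show ?thesis unfolding approx_def using FOL_empty by auto
      next
        case Ane: False
        show ?thesis
        proof (cases "card A = 1")
          case True
          then obtain a where "A = {a}" by (rule card_1_singletonE)
          then show ?thesis by (rule base_case)
        next
          case c1: False
          show ?thesis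
          proof (cases "\<exists>c\<in>A. insert c (mul c ` cl A) \<noteq> cl A")
            case True
            then obtain c where c: "c \<in> A" "insert c (mul c ` cl A) \<noteq> cl A" by blast
            have "insert c (mul c ` cl A) \<subset> cl A" using sub1[OF c(1)] c(2) by blast
            then have "card (insert c (mul c ` cl A)) < card (cl A)" by (rule psubset_card_mono[rotated]) simp
            then show ?thesis using left_red[OF c(1) _ IH'] by blast
          next
            case nL: False
            show ?thesis
            proof (cases "\<exists>c\<in>A. insert c ((\<lambda>s. mul s c) ` cl A) \<noteq> cl A")
              case True
              then obtain c where c: "c \<in> A" "insert c ((\<lambda>s. mul s c) ` cl A) \<noteq> cl A" by blast
              have "insert c ((\<lambda>s. mul s c) ` cl A) \<subset> cl A" using sub2[OF c(1)] c(2) by blast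
              then have lt: "card (insert c ((\<lambda>s. mul s c) ` cl A)) < card (cl A)"
                by (rule psubset_card_mono[rotated]) simp
              have "\<exists>R. approx le (\<lambda>a b. mul b a) one sh A R"
              proof (rule gm.left_red[OF gr c(1) _ IHr])
                show "card (insert c ((\<lambda>s. mul s c) ` clo (\<lambda>a b. mul b a) sh A)) < card (clo (\<lambda>a b. mul b a) sh A)"
                  using lt by (simp add: clo_rev[of mul sh])
              qed
              then obtain R' where "approx le (\<lambda>a b. mul b a) one sh A R'" by blast
              then show ?thesis using rev_approx by blast
            next
              case nR: False
              have "card A \<ge> 2" using Ane c1 by (cases "card A") (auto simp: card_eq_0_iff)
              then show ?thesis using stuck_case nL nR by blast
            qed
          qed
        qed
      qed
    qed
  qed
  then show ?thesis using assms by blast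
qed


lemma wo_facts:
  assumes "Well_order r"
  shows "refl_on (Field r) r" "trans r" "antisym r" "total_on (Field r) r" "wf (r - Id)"
  using assms unfolding order_on_defs by auto

lemma restr_Restr: "restr r S = Restr r S" unfolding restr_def by simp

lemma ordword_restr: "ordword u \<Longrightarrow> ordword (restr (fst u) S, w)"
  unfolding ordword_def restr_Restr by (simp add: Well_order_Restr)

lemma Field_restr: "ordword u \<Longrightarrow> S \<subseteq> wdom u \<Longrightarrow> Field (restr (fst u) S) = S"
  unfolding ordword_def restr_Restr wdom_def
  using wo_facts(1) by (intro Refl_Field_Restr2) auto

lemma natLeq2: "natLeq_on 2 = {(0::nat,0),(0,1),(1,1)}"
  by (auto simp: less_2_cases_iff)

lemma std2_wo: "Well_order {(0::nat,0),(0,1),(1,1)}"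
  using natLeq_on_Well_order[of 2] natLeq2 by simp

lemma Field_std2: "Field {(0::nat,0),(0,1),(1,1)} = {0,1}"
  unfolding Field_def by auto

locale oom =
  fixes le :: "'m \<Rightarrow> 'm \<Rightarrow> bool" and pi :: "'m oword \<Rightarrow> 'm"
  assumes oom: "ordered_ordinal_monoid le pi"
begin

lemma ax_refl: "le x x"
proof -
  have "\<forall>x. le x x" using oom unfolding ordered_ordinal_monoid_def by (elim conjE) assumption
  then show ?thesis by blast
qed
lemma ax_trans: "le x y \<Longrightarrow> le y z \<Longrightarrow> le x z"
proof -
  have "\<forall>x y z. le x y \<longrightarrow> le y z \<longrightarrow> le x z" using oom unfolding ordered_ordinal_monoid_def by (elim conjE) assumption
  then show "le x y \<Longrightarrow> le y z \<Longrightarrow> le x z" by blast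
qed
lemma ax_iso: "ordword u \<Longrightarrow> ordword v \<Longrightarrow> word_iso u v \<Longrightarrow> pi u = pi v"
proof -
  have "\<forall>u v. ordword u \<longrightarrow> ordword v \<longrightarrow> word_iso u v \<longrightarrow> pi u = pi v"
    using oom unfolding ordered_ordinal_monoid_def by (elim conjE) assumption
  then show "ordword u \<Longrightarrow> ordword v \<Longrightarrow> word_iso u v \<Longrightarrow> pi u = pi v" by blast
qed
lemma ax_single: "pi ({(n, n)}, w) = w n"
proof -
  have "\<forall>n w. pi ({(n, n)}, w) = w n"
    using oom unfolding ordered_ordinal_monoid_def by (elim conjE) assumption
  then show ?thesis by blast
qed
lemma ax_assoc:
  "ordword u \<Longrightarrow> (\<forall>x\<in>wdom u. bk x \<in> wdom u \<and> bk (bk x) = bk x) \<Longrightarrow>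
        (\<forall>x y z. x \<in> wdom u \<longrightarrow> z \<in> wdom u \<longrightarrow> (x, y) \<in> fst u \<longrightarrow> (y, z) \<in> fst u \<longrightarrow>
                 bk x = bk z \<longrightarrow> bk y = bk x) \<Longrightarrow>
        pi u = pi (restr (fst u) (bk ` wdom u),
                   (\<lambda>m. pi (restr (fst u) {x \<in> wdom u. bk x = m}, snd u)))"
proof -
  have ax0: "\<forall>u blk. ordword u \<longrightarrow>
        (\<forall>x\<in>wdom u. blk x \<in> wdom u \<and> blk (blk x) = blk x) \<longrightarrow>
        (\<forall>x y z. x \<in> wdom u \<longrightarrow> z \<in> wdom u \<longrightarrow> (x, y) \<in> fst u \<longrightarrow> (y, z) \<in> fst u \<longrightarrow>
                 blk x = blk z \<longrightarrow> blk y = blk x) \<longrightarrow>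
        pi u = pi (restr (fst u) (blk ` wdom u),
                   (\<lambda>m. pi (restr (fst u) {x \<in> wdom u. blk x = m}, snd u)))"
    using oom unfolding ordered_ordinal_monoid_def by (elim conjE) assumption
  then show "ordword u \<Longrightarrow> (\<forall>x\<in>wdom u. bk x \<in> wdom u \<and> bk (bk x) = bk x) \<Longrightarrow>
        (\<forall>x y z. x \<in> wdom u \<longrightarrow> z \<in> wdom u \<longrightarrow> (x, y) \<in> fst u \<longrightarrow> (y, z) \<in> fst u \<longrightarrow>
                 bk x = bk z \<longrightarrow> bk y = bk x) \<Longrightarrow>
        pi u = pi (restr (fst u) (bk ` wdom u),
                   (\<lambda>m. pi (restr (fst u) {x \<in> wdom u. bk x = m}, snd u)))"
  proof -
    assume a: "ordword u" "\<forall>x\<in>wdom u. bk x \<in> wdom u \<and> bk (bk x) = bk x"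
      "\<forall>x y z. x \<in> wdom u \<longrightarrow> z \<in> wdom u \<longrightarrow> (x, y) \<in> fst u \<longrightarrow> (y, z) \<in> fst u \<longrightarrow>
                 bk x = bk z \<longrightarrow> bk y = bk x"
    from ax0 have h: "\<forall>blk. ordword u \<longrightarrow>
        (\<forall>x\<in>wdom u. blk x \<in> wdom u \<and> blk (blk x) = blk x) \<longrightarrow>
        (\<forall>x y z. x \<in> wdom u \<longrightarrow> z \<in> wdom u \<longrightarrow> (x, y) \<in> fst u \<longrightarrow> (y, z) \<in> fst u \<longrightarrow>
                 blk x = blk z \<longrightarrow> blk y = blk x) \<longrightarrow>
        pi u = pi (restr (fst u) (blk ` wdom u),
                   (\<lambda>m. pi (restr (fst u) {x \<in> wdom u. blk x = m}, snd u)))" by (rule spec)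
    then have "ordword u \<longrightarrow>
        (\<forall>x\<in>wdom u. bk x \<in> wdom u \<and> bk (bk x) = bk x) \<longrightarrow>
        (\<forall>x y z. x \<in> wdom u \<longrightarrow> z \<in> wdom u \<longrightarrow> (x, y) \<in> fst u \<longrightarrow> (y, z) \<in> fst u \<longrightarrow>
                 bk x = bk z \<longrightarrow> bk y = bk x) \<longrightarrow>
        pi u = pi (restr (fst u) (bk ` wdom u),
                   (\<lambda>m. pi (restr (fst u) {x \<in> wdom u. bk x = m}, snd u)))" by (rule spec)
    then show ?thesis using a by blast
  qed
qed
lemma ax_del: "ordword u \<Longrightarrow> E \<subseteq> wdom u \<Longrightarrow> (\<forall>e\<in>E. snd u e = pi empty_word) \<Longrightarrow>
        pi u = pi (restr (fst u) (wdom u - E), snd u)"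
proof -
  have "\<forall>u E. ordword u \<longrightarrow> E \<subseteq> wdom u \<longrightarrow> (\<forall>e\<in>E. snd u e = pi empty_word) \<longrightarrow>
        pi u = pi (restr (fst u) (wdom u - E), snd u)"
    using oom unfolding ordered_ordinal_monoid_def by (elim conjE) assumption
  then show "ordword u \<Longrightarrow> E \<subseteq> wdom u \<Longrightarrow> (\<forall>e\<in>E. snd u e = pi empty_word) \<Longrightarrow>
        pi u = pi (restr (fst u) (wdom u - E), snd u)" by blast
qed
lemma ax_mono: "ordword (r, w) \<Longrightarrow> (\<forall>x\<in>Field r. le (w x) (w' x)) \<Longrightarrow> le (pi (r, w)) (pi (r, w'))"
proof -
  have "\<forall>r w w'. ordword (r, w) \<longrightarrow> (\<forall>x\<in>Field r. le (w x) (w' x)) \<longrightarrow>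
        le (pi (r, w)) (pi (r, w'))"
    using oom unfolding ordered_ordinal_monoid_def by (elim conjE) assumption
  then show "ordword (r, w) \<Longrightarrow> (\<forall>x\<in>Field r. le (w x) (w' x)) \<Longrightarrow> le (pi (r, w)) (pi (r, w'))" by blast
qed

lemma pi_iso:
  assumes "Well_order r" "Well_order r'" "bij_betw f (Field r) (Field r')"
    "\<And>a b. (a,b) \<in> r \<Longrightarrow> (f a, f b) \<in> r'" "\<And>x. x \<in> Field r \<Longrightarrow> w' (f x) = w x"
  shows "pi (r, w) = pi (r', w')"
proof (rule ax_iso)
  show "ordword (r, w)" "ordword (r', w')" using assms unfolding ordword_def by auto
  have "iso r r' f" using assms by (simp add: iso_iff3 compat_def)
  then show "word_iso (r, w) (r', w')" unfolding word_iso_def wdom_def using assms(5) by auto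
qed

lemma pi_labels:
  assumes "Well_order r" "\<And>x. x \<in> Field r \<Longrightarrow> w x = w' x"
  shows "pi (r, w) = pi (r, w')"
  by (rule pi_iso[where f=id]) (use assms in auto)

lemma pi_two:
  assumes "ordword (r, w)" "Field r = {p, q}" "(p, q) \<in> r" "p \<noteq> q"
  shows "pi (r, w) = mult pi (w p) (w q)"
proof -
  have wo: "Well_order r" using assms unfolding ordword_def by simp
  have qp: "(q, p) \<notin> r" using wo_facts(3)[OF wo] assms(3,4) unfolding antisym_def by blast
  have rr: "r = {(p,p),(p,q),(q,q)}"
  proof
    show "r \<subseteq> {(p,p),(p,q),(q,q)}"
    proof
      fix x assume x: "x \<in> r"
      obtain a b where ab: "x = (a,b)" by (cases x)
      have "a \<in> {p,q}" "b \<in> {p,q}" using x ab assms(2) by (auto intro: FieldI1 FieldI2)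
      then show "x \<in> {(p,p),(p,q),(q,q)}" using ab x qp by auto
    qed
    show "{(p,p),(p,q),(q,q)} \<subseteq> r" using wo_facts(1)[OF wo] assms(2,3) unfolding refl_on_def by auto
  qed
  show ?thesis unfolding mult_def
  proof (rule pi_iso[where f="\<lambda>x. if x = p then 0 else 1"])
    show "Well_order r" by (rule wo)
    show "Well_order {(0::nat,0),(0,1),(1,1)}" by (rule std2_wo)
    show "bij_betw (\<lambda>x. if x = p then 0 else 1) (Field r) (Field {(0::nat, 0), (0, 1), (1, 1)})"
      unfolding Field_std2 assms(2) bij_betw_def inj_on_def using assms(4) by auto
    show "((if a = p then 0 else 1), (if b = p then 0 else 1)) \<in> {(0::nat, 0), (0, 1), (1, 1)}"
      if "(a, b) \<in> r" for a b using that assms(4) unfolding rr by auto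
    show "(if (if x = p then 0 else 1) = (0::nat) then w p else w q) = w x" if "x \<in> Field r" for x
      using that assms(2) by auto
  qed
qed

lemma pi_split:
  assumes u: "ordword u" and PQ: "P \<union> Q = wdom u" "P \<inter> Q = {}" "P \<noteq> {}" "Q \<noteq> {}"
    and ord: "\<And>p q. p \<in> P \<Longrightarrow> q \<in> Q \<Longrightarrow> (p, q) \<in> fst u"
  shows "pi u = mult pi (pi (restr (fst u) P, snd u)) (pi (restr (fst u) Q, snd u))"
proof -
  obtain p0 where p0: "p0 \<in> P" using PQ(3) by blast
  obtain q0 where q0: "q0 \<in> Q" using PQ(4) by blast
  have pq: "p0 \<noteq> q0" using p0 q0 PQ(2) by blast
  define bk where "bk x = (if x \<in> P then p0 else q0)" for x
  have wo: "Well_order (fst u)" using u unfolding ordword_def by simp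
  have anti: "antisym (fst u)" by (rule wo_facts(3)[OF wo])
  have pD: "p0 \<in> wdom u" "q0 \<in> wdom u" "q0 \<notin> P" using PQ(1,2) p0 q0 by auto
  have A1: "\<forall>x\<in>wdom u. bk x \<in> wdom u \<and> bk (bk x) = bk x"
    using pD p0 unfolding bk_def by auto
  have A2: "\<forall>x y z. x \<in> wdom u \<longrightarrow> z \<in> wdom u \<longrightarrow> (x, y) \<in> fst u \<longrightarrow> (y, z) \<in> fst u \<longrightarrow>
                 bk x = bk z \<longrightarrow> bk y = bk x"
  proof (intro allI impI)
    fix x y z assume xz: "x \<in> wdom u" "z \<in> wdom u" and xy: "(x, y) \<in> fst u" and yz: "(y, z) \<in> fst u"
      and b: "bk x = bk z"
    have yD: "y \<in> wdom u" using xy unfolding wdom_def by (auto intro: FieldI2)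
    have same: "(x \<in> P \<and> z \<in> P) \<or> (x \<in> Q \<and> z \<in> Q)" using b xz PQ pq unfolding bk_def by (auto split: if_splits)
    show "bk y = bk x"
    proof (cases "x \<in> P")
      case True
      then have zP: "z \<in> P" using same PQ(2) by blast
      show ?thesis
      proof (rule ccontr)
        assume "bk y \<noteq> bk x"
        then have "y \<notin> P" using True unfolding bk_def by auto
        then have "y \<in> Q" using yD PQ(1) by blast
        then have "(z, y) \<in> fst u" using ord zP by blast
        then have "y = z" using yz anti unfolding antisym_def by blast
        then show False using \<open>y \<notin> P\<close> zP by simp
      qed
    next
      case False
      then have xQ: "x \<in> Q" using xz PQ(1) by blast
      show ?thesis
      proof (rule ccontr)
        assume "bk y \<noteq> bk x"
        then have "y \<in> P" using False unfolding bk_def by (auto split: if_splits)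
        then have "(y, x) \<in> fst u" using ord xQ by blast
        then have "y = x" using xy anti unfolding antisym_def by blast
        then show False using \<open>y \<in> P\<close> False by simp
      qed
    qed
  qed
  have img: "bk ` wdom u = {p0, q0}" using p0 q0 PQ unfolding bk_def by auto
  have bP: "{x \<in> wdom u. bk x = p0} = P" using PQ pq unfolding bk_def by auto
  have bQ: "{x \<in> wdom u. bk x = q0} = Q" using PQ pq unfolding bk_def by auto
  have "pi u = pi (restr (fst u) {p0, q0}, (\<lambda>m. pi (restr (fst u) {x \<in> wdom u. bk x = m}, snd u)))"
    using ax_assoc[OF u A1 A2] img by simp
  also have "\<dots> = mult pi (pi (restr (fst u) {x \<in> wdom u. bk x = p0}, snd u))
                       (pi (restr (fst u) {x \<in> wdom u. bk x = q0}, snd u))"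
  proof (rule pi_two)
    show "ordword (restr (fst u) {p0, q0}, \<lambda>m. pi (restr (fst u) {x \<in> wdom u. bk x = m}, snd u))"
      by (rule ordword_restr[OF u])
    show "Field (restr (fst u) {p0, q0}) = {p0, q0}" by (rule Field_restr[OF u]) (use pD in auto)
    show "(p0, q0) \<in> restr (fst u) {p0, q0}" using ord p0 q0 unfolding restr_def by auto
    show "p0 \<noteq> q0" by (rule pq)
  qed
  finally show ?thesis unfolding bP bQ .
qed

end


lemma natLeq_eq: "{(i, j). i \<le> j \<and> j < n} = natLeq_on n" by auto

lemma funpow_period:
  fixes g :: "'m::finite \<Rightarrow> 'm"
  shows "\<exists>i p. p \<ge> 1 \<and> (\<forall>t\<ge>i. \<forall>k. (g ^^ (t + k * p)) x = (g ^^ t) x)"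
proof -
  let ?f = "\<lambda>n. (g ^^ n) x"
  have "\<not> inj_on ?f {0..card (UNIV::'m set)}"
  proof
    assume "inj_on ?f {0..card (UNIV::'m set)}"
    then have "card (?f ` {0..card (UNIV::'m set)}) = Suc (card (UNIV::'m set))" by (simp add: card_image)
    moreover have "card (?f ` {0..card (UNIV::'m set)}) \<le> card (UNIV::'m set)" by (rule card_mono) auto
    ultimately show False by simp
  qed
  then obtain a b where ab: "a \<noteq> b" "?f a = ?f b" unfolding inj_on_def by blast
  have "\<exists>i j. i < j \<and> ?f i = ?f j"
  proof (cases "a < b")
    case True then show ?thesis using ab by blast
  next
    case False
    then have "b < a" using ab(1) by simp
    then show ?thesis using ab by (intro exI[of _ b] exI[of _ a]) simp
  qed
  then obtain i j where ij: "i < j" "?f i = ?f j" by blast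
  define p where "p = j - i"
  have step: "?f (t + p) = ?f t" if "t \<ge> i" for t
  proof -
    have e1: "t + p = (t - i) + (i + p)" using that by simp
    have e2: "t = (t - i) + i" using that by simp
    have "?f (t + p) = (g ^^ (t - i)) (?f (i + p))" by (subst e1) (simp only: funpow_add comp_def)
    also have "?f (i + p) = ?f i" using ij unfolding p_def by simp
    also have "(g ^^ (t - i)) (?f i) = ?f ((t - i) + i)" by (simp only: funpow_add comp_def)
    also have "\<dots> = ?f t" using e2 by simp
    finally show ?thesis .
  qed
  have "?f (t + k * p) = ?f t" if "t \<ge> i" for t k
  proof (induction k)
    case (Suc k)
    have "?f (t + Suc k * p) = ?f ((t + k * p) + p)" by (simp add: algebra_simps)
    also have "\<dots> = ?f (t + k * p)" using that by (intro step) simp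
    finally show ?case using Suc by simp
  qed simp
  moreover have "p \<ge> 1" using ij unfolding p_def by simp
  ultimately show ?thesis by blast
qed

context oom
begin

abbreviation "one \<equiv> pi empty_word"

lemma std2_ordword: "ordword ({(0::nat,0),(0,1),(1,1)}, w)"
  unfolding ordword_def using std2_wo by simp

lemma mult_one_right: "mult pi a one = a"
proof -
  let ?u = "({(0::nat,0),(0,1),(1,1)}, (\<lambda>n::nat. if n = 0 then a else one))"
  have pre: "ordword ?u" "{1} \<subseteq> wdom ?u" "\<forall>e\<in>{1}. snd ?u e = one"
    using std2_ordword by (auto simp: wdom_def Field_std2)
  note h = ax_del[OF pre]
  have r: "restr (fst ?u) (wdom ?u - {1}) = {(0,0)}" unfolding restr_def wdom_def Field_std2 by auto
  show ?thesis unfolding mult_def using h r ax_single[of 0] by simp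
qed

lemma mult_one_left: "mult pi one a = a"
proof -
  let ?u = "({(0::nat,0),(0,1),(1,1)}, (\<lambda>n::nat. if n = 0 then one else a))"
  have pre: "ordword ?u" "{0} \<subseteq> wdom ?u" "\<forall>e\<in>{0}. snd ?u e = one"
    using std2_ordword by (auto simp: wdom_def Field_std2)
  note h = ax_del[OF pre]
  have r: "restr (fst ?u) (wdom ?u - {0}) = {(1,1)}" unfolding restr_def wdom_def Field_std2 by auto
  show ?thesis unfolding mult_def using h r ax_single[of 1] by simp
qed

lemma mult_mono: "le a a' \<Longrightarrow> le b b' \<Longrightarrow> le (mult pi a b) (mult pi a' b')"
  unfolding mult_def by (rule ax_mono[OF std2_ordword]) auto

lemma mult_assoc: "mult pi (mult pi a b) c = mult pi a (mult pi b c)"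
proof -
  define w where "w n = (if n = 0 then a else if n = 1 then b else c)" for n :: nat
  define u where "u = (natLeq_on 3, w)"
  have u: "ordword u" unfolding u_def ordword_def using natLeq_on_Well_order by simp
  have l3: "{x::nat. x < 3} = {0,1,2}" by (auto simp: numeral_3_eq_3 less_Suc_eq)
  have D: "wdom u = {0,1,2}" unfolding u_def wdom_def using Field_natLeq_on[of 3] l3 by simp
  have sub: "ordword (restr (fst u) S, w)" for S using ordword_restr[OF u] .
  have r0: "restr (fst u) {0} = {(0,0)}" unfolding u_def restr_def by auto
  have r2: "restr (fst u) {2} = {(2,2)}" unfolding u_def restr_def by auto
  have F12: "Field (restr (fst u) {1,2}) = {1,2}" using Field_restr[OF u] D by auto
  have F01: "Field (restr (fst u) {0,1}) = {0,1}" using Field_restr[OF u] D by auto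
  have "pi u = mult pi (pi (restr (fst u) {0}, snd u)) (pi (restr (fst u) {1,2}, snd u))"
  proof (rule pi_split[OF u])
    show "{0} \<union> {1,2} = wdom u" using D by auto
    show "(p, q) \<in> fst u" if "p \<in> {0}" "q \<in> {1,2}" for p q using that unfolding u_def by auto
  qed auto
  also have "pi (restr (fst u) {1,2}, snd u) = mult pi b c"
    using pi_two[OF sub[of "{1,2}"] F12] unfolding u_def restr_def w_def by auto
  finally have 1: "pi u = mult pi a (mult pi b c)" using r0 ax_single unfolding u_def w_def by simp
  have "pi u = mult pi (pi (restr (fst u) {0,1}, snd u)) (pi (restr (fst u) {2}, snd u))"
  proof (rule pi_split[OF u])
    show "{0,1} \<union> {2} = wdom u" using D by auto
    show "(p, q) \<in> fst u" if "p \<in> {0,1}" "q \<in> {2}" for p q using that unfolding u_def by auto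
  qed auto
  also have "pi (restr (fst u) {0,1}, snd u) = mult pi a b"
    using pi_two[OF sub[of "{0,1}"] F01] unfolding u_def restr_def w_def by auto
  finally have 2: "pi u = mult pi (mult pi a b) c" using r2 ax_single unfolding u_def w_def by simp
  show ?thesis using 1 2 by simp
qed

lemma mpow_Suc: "mpow pi a (Suc (Suc n)) = mult pi (mpow pi a (Suc n)) a"
proof -
  define u where "u = (natLeq_on (Suc (Suc n)), (\<lambda>_::nat. a))"
  have u: "ordword u" unfolding u_def ordword_def using natLeq_on_Well_order by simp
  have D: "wdom u = {x. x < Suc (Suc n)}" using Field_natLeq_on[of "Suc (Suc n)"] unfolding u_def wdom_def by simp
  have "pi u = mult pi (pi (restr (fst u) {x. x < Suc n}, snd u)) (pi (restr (fst u) {Suc n}, snd u))"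
  proof (rule pi_split[OF u])
    show "{x. x < Suc n} \<union> {Suc n} = wdom u" unfolding D by auto
    show "(p, q) \<in> fst u" if "p \<in> {x. x < Suc n}" "q \<in> {Suc n}" for p q
      using that unfolding u_def by auto
  qed auto
  moreover have "restr (fst u) {x. x < Suc n} = natLeq_on (Suc n)" unfolding u_def restr_def by auto
  moreover have "restr (fst u) {Suc n} = {(Suc n, Suc n)}" unfolding u_def restr_def by auto
  ultimately have "pi u = mult pi (pi (natLeq_on (Suc n), (\<lambda>_. a))) a" using ax_single unfolding u_def by simp
  then show ?thesis unfolding mpow_def natLeq_eq u_def .
qed

lemma mpow_1: "mpow pi a (Suc 0) = a"
proof -
  have "{(i, j). i \<le> j \<and> j < Suc 0} = {(0::nat, 0::nat)}" by auto
  then show ?thesis unfolding mpow_def using ax_single by simp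
qed

lemma mpow_0: "mpow pi a 0 = one"
proof -
  have "{(i, j). i \<le> j \<and> j < (0::nat)} = {}" by auto
  then show ?thesis unfolding mpow_def empty_word_def by (simp only:) (rule pi_labels, auto simp: Field_def)
qed

lemma mpow_pw: "mpow pi a n = pw (mult pi) one a n"
proof (induction n rule: nat_less_induct)
  case (1 n)
  show ?case
  proof (cases n)
    case 0 then show ?thesis by (simp add: mpow_0)
  next
    case (Suc m)
    show ?thesis
    proof (cases m)
      case 0 then show ?thesis using Suc by (simp add: mpow_1 pw_Suc mult_one_right)
    next
      case (Suc k)
      have pw': "pw (mult pi) one a (Suc j) = mult pi (pw (mult pi) one a j) a" for j
      proof (induction j)
        case 0 then show ?case by (simp add: pw_Suc mult_one_right mult_one_left)
      next
        case (Suc j)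
        have "pw (mult pi) one a (Suc (Suc j)) = mult pi a (mult pi (pw (mult pi) one a j) a)"
          using Suc by (simp add: pw_Suc)
        then show ?case by (simp add: pw_Suc mult_assoc)
      qed
      show ?thesis using 1 \<open>n = Suc m\<close> Suc by (simp add: mpow_Suc pw')
    qed
  qed
qed

end

lemma oom_gm:
  fixes le :: "'m::finite \<Rightarrow> 'm \<Rightarrow> bool"
  assumes M: "ordinal_monoid_with_merge le pi sh"
  shows "gm le (mult pi) (pi empty_word) sh"
proof -
  have o: "ordered_ordinal_monoid le pi" using M unfolding ordinal_monoid_with_merge_def by blast
  interpret oom le pi by (rule oom.intro[OF o])
  have idem_le: "le (idem_plus pi a k) (sh a)" for a k
    using M unfolding ordinal_monoid_with_merge_def by blast
  have shm: "sh (mult pi a b) = mult pi a (mult pi (sh (mult pi b a)) b)" for a b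
    using M unfolding ordinal_monoid_with_merge_def by blast
  show ?thesis
  proof
    show "le x x" for x by (rule ax_refl)
    show "le x y \<Longrightarrow> le y z \<Longrightarrow> le x z" for x y z by (rule ax_trans)
    show "mult pi (mult pi a b) c = mult pi a (mult pi b c)" for a b c by (rule mult_assoc)
    show "mult pi one a = a" for a by (rule mult_one_left)
    show "mult pi a one = a" for a by (rule mult_one_right)
    show "le a a' \<Longrightarrow> le b b' \<Longrightarrow> le (mult pi a b) (mult pi a' b')" for a a' b b' by (rule mult_mono)
    show "sh (mult pi a b) = mult pi a (mult pi (sh (mult pi b a)) b)" for a b by (rule shm)
    show "\<exists>N. \<forall>n\<ge>N. le (pw (mult pi) one a n) (sh a)" for a
    proof -
      obtain i p where ip: "p \<ge> 1" "\<forall>t\<ge>i. \<forall>k. (mult pi a ^^ (t + k * p)) one = (mult pi a ^^ t) one"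
        using funpow_period[of "mult pi a" one] by blast
      have per: "pw (mult pi) one a (t + k * p) = pw (mult pi) one a t" if "t \<ge> i" for t k
        using ip(2) that unfolding pw_def by blast
      have "le (pw (mult pi) one a n) (sh a)" if "n \<ge> i" for n
      proof -
        have ev: "\<forall>m\<ge>p. mpow pi a (fact m + n) = pw (mult pi) one a n"
        proof (intro allI impI)
          fix m assume "m \<ge> p"
          then have "p dvd fact m" using ip(1) by (intro dvd_fact) auto
          then obtain k where "fact m = k * p" by (auto simp: dvd_def mult.commute)
          then show "mpow pi a (fact m + n) = pw (mult pi) one a n"
            using per[OF that, of k] by (simp add: mpow_pw add.commute)
        qed
        have "idem_plus pi a n = pw (mult pi) one a n"
          unfolding idem_plus_def
        proof (rule the_equality)
          show "\<exists>N. \<forall>m\<ge>N. mpow pi a (fact m + n) = pw (mult pi) one a n" using ev by blast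
        next
          fix y assume "\<exists>N. \<forall>m\<ge>N. mpow pi a (fact m + n) = y"
          then obtain N where N: "\<forall>m\<ge>N. mpow pi a (fact m + n) = y" by blast
          have "mpow pi a (fact (max N p) + n) = y" using N by simp
          moreover have "mpow pi a (fact (max N p) + n) = pw (mult pi) one a n" using ev by simp
          ultimately show "y = pw (mult pi) one a n" by simp
        qed
        then show ?thesis using idem_le[of a n] by simp
      qed
      then show ?thesis by blast
    qed
  qed
qed


definition rank :: "'a oword \<Rightarrow> nat \<Rightarrow> nat" where
  "rank u p = card {q \<in> wdom u. (q, p) \<in> fst u \<and> q \<noteq> p}"

definition list_of :: "'a oword \<Rightarrow> 'a list" where
  "list_of u = map (\<lambda>i. snd u (inv_into (wdom u) (rank u) i)) [0..<card (wdom u)]"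

locale fword =
  fixes u :: "'a oword"
  assumes ow: "ordword u" and fin: "finite (wdom u)"
begin

abbreviation "D \<equiv> wdom u"
abbreviation "r \<equiv> fst u"

lemma wo: "Well_order r" using ow unfolding ordword_def .
lemma rtrans: "trans r" using wo_facts(2)[OF wo] .
lemma ranti: "antisym r" using wo_facts(3)[OF wo] .
lemma rtotal: "p \<in> D \<Longrightarrow> q \<in> D \<Longrightarrow> p \<noteq> q \<Longrightarrow> (p, q) \<in> r \<or> (q, p) \<in> r"
  using wo_facts(4)[OF wo] unfolding total_on_def wdom_def by blast
lemma rrefl: "p \<in> D \<Longrightarrow> (p, p) \<in> r"
  using wo_facts(1)[OF wo] unfolding refl_on_def wdom_def by blast
lemma inD: "(p, q) \<in> r \<Longrightarrow> p \<in> D \<and> q \<in> D"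
  unfolding wdom_def by (auto intro: FieldI1 FieldI2)

lemma rank_less:
  assumes "p \<in> D" "q \<in> D" "(p, q) \<in> r" "p \<noteq> q"
  shows "rank u p < rank u q"
proof -
  have sub: "{y \<in> D. (y, p) \<in> r \<and> y \<noteq> p} \<subset> {y \<in> D. (y, q) \<in> r \<and> y \<noteq> q}"
  proof
    show "{y \<in> D. (y, p) \<in> r \<and> y \<noteq> p} \<subseteq> {y \<in> D. (y, q) \<in> r \<and> y \<noteq> q}"
    proof
      fix y assume y: "y \<in> {y \<in> D. (y, p) \<in> r \<and> y \<noteq> p}"
      then have yq: "(y, q) \<in> r" using assms(3) rtrans unfolding trans_def by blast
      have "y \<noteq> q"
      proof
        assume "y = q"
        then have "(q, p) \<in> r" using y by simp
        then show False using assms(3,4) ranti unfolding antisym_def by blast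
      qed
      then show "y \<in> {y \<in> D. (y, q) \<in> r \<and> y \<noteq> q}" using y yq by simp
    qed
    show "{y \<in> D. (y, p) \<in> r \<and> y \<noteq> p} \<noteq> {y \<in> D. (y, q) \<in> r \<and> y \<noteq> q}"
      using assms by blast
  qed
  show ?thesis unfolding rank_def by (rule psubset_card_mono[OF _ sub]) (use fin in simp)
qed

lemma rank_lt: "p \<in> D \<Longrightarrow> rank u p < card D"
proof -
  assume p: "p \<in> D"
  have "{y \<in> D. (y, p) \<in> r \<and> y \<noteq> p} \<subseteq> D - {p}" by auto
  then have "rank u p \<le> card (D - {p})" unfolding rank_def by (intro card_mono) (use fin in auto)
  also have "\<dots> < card D" by (rule card_Diff1_less[OF fin p])
  finally show ?thesis .
qed

lemma rank_less_iff:
  assumes "p \<in> D" "q \<in> D"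
  shows "rank u p < rank u q \<longleftrightarrow> (p, q) \<in> r \<and> p \<noteq> q"
proof
  assume l: "rank u p < rank u q"
  then have pq: "p \<noteq> q" by auto
  show "(p, q) \<in> r \<and> p \<noteq> q"
  proof (rule ccontr)
    assume "\<not> ((p, q) \<in> r \<and> p \<noteq> q)"
    then have "(q, p) \<in> r" using rtotal[OF assms pq] pq by blast
    then have "rank u q < rank u p" using rank_less[OF assms(2,1)] pq by simp
    then show False using l by simp
  qed
next
  assume "(p, q) \<in> r \<and> p \<noteq> q"
  then show "rank u p < rank u q" using rank_less[OF assms] by blast
qed

lemma rank_inj: "inj_on (rank u) D"
proof (rule inj_onI)
  fix p q assume pq: "p \<in> D" "q \<in> D" "rank u p = rank u q"
  show "p = q"
  proof (rule ccontr)
    assume "p \<noteq> q"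
    then have "(p, q) \<in> r \<or> (q, p) \<in> r" using rtotal pq by blast
    then show False using rank_less[OF pq(1,2)] rank_less[OF pq(2,1)] pq(3) \<open>p \<noteq> q\<close> by auto
  qed
qed

lemma rank_img: "rank u ` D = {0..<card D}"
proof (rule card_subset_eq)
  show "finite {0..<card D}" by simp
  show "rank u ` D \<subseteq> {0..<card D}" using rank_lt by auto
  show "card (rank u ` D) = card {0..<card D}" using card_image[OF rank_inj] by simp
qed

lemma len_list_of: "length (list_of u) = card D"
  unfolding list_of_def by simp

lemma list_of_nth: "p \<in> D \<Longrightarrow> list_of u ! rank u p = snd u p"
  unfolding list_of_def using rank_lt[of p] inv_into_f_f[OF rank_inj] by simp

lemma list_of_char:
  assumes "length L = card D" "\<And>p. p \<in> D \<Longrightarrow> L ! rank u p = snd u p"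
  shows "L = list_of u"
proof (rule nth_equalityI)
  show "length L = length (list_of u)" using assms(1) len_list_of by simp
  fix i assume "i < length L"
  then have "i \<in> rank u ` D" using rank_img assms(1) by simp
  then obtain p where "p \<in> D" "i = rank u p" by blast
  then show "L ! i = list_of u ! i" using assms(2) list_of_nth by simp
qed

lemma set_list_of: "set (list_of u) = snd u ` D"
proof
  show "set (list_of u) \<subseteq> snd u ` D"
  proof
    fix x assume "x \<in> set (list_of u)"
    then obtain i where i: "i < length (list_of u)" "list_of u ! i = x" by (auto simp: in_set_conv_nth)
    then have "i \<in> rank u ` D" using rank_img len_list_of by simp
    then obtain p where "p \<in> D" "i = rank u p" by blast
    then show "x \<in> snd u ` D" using i list_of_nth by auto
  qed
  show "snd u ` D \<subseteq> set (list_of u)"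
  proof
    fix x assume "x \<in> snd u ` D"
    then obtain p where p: "p \<in> D" "x = snd u p" by blast
    then have "list_of u ! rank u p = x" using list_of_nth by simp
    moreover have "rank u p < length (list_of u)" using rank_lt[OF p(1)] len_list_of by simp
    ultimately show "x \<in> set (list_of u)" using nth_mem by blast
  qed
qed

lemma sat_transfer:
  "\<forall>v\<in>fv f. s v \<in> D \<Longrightarrow> sat u s f \<longleftrightarrow> satL (list_of u) (\<lambda>v. rank u (s v)) f"
proof (induction f arbitrary: s)
  case (FLess x y)
  then show ?case using rank_less_iff[of "s x" "s y"] by auto
next
  case (FEq x y)
  then show ?case using rank_inj unfolding inj_on_def by auto
next
  case (FLetter a x)
  then show ?case using list_of_nth[of "s x"] by auto
next
  case (FNeg f)
  then show ?case by simp
next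
  case (FConj f g)
  then show ?case by simp
next
  case (FEx x f)
  have eq: "(\<lambda>v. rank u ((s(x := p)) v)) = (\<lambda>v. rank u (s v))(x := rank u p)" for p by auto
  have step: "sat u (s(x := p)) f \<longleftrightarrow> satL (list_of u) ((\<lambda>v. rank u (s v))(x := rank u p)) f" if "p \<in> D" for p
  proof -
    have pre: "\<forall>v\<in>fv f. (s(x := p)) v \<in> D" using FEx.prems that by auto
    show ?thesis using FEx.IH[OF pre] by (simp only: eq)
  qed
  have "sat u s (FEx x f) \<longleftrightarrow> (\<exists>p\<in>D. satL (list_of u) ((\<lambda>v. rank u (s v))(x := rank u p)) f)"
    using step by simp
  also have "\<dots> \<longleftrightarrow> (\<exists>i<length (list_of u). satL (list_of u) ((\<lambda>v. rank u (s v))(x := i)) f)"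
  proof
    assume "\<exists>p\<in>D. satL (list_of u) ((\<lambda>v. rank u (s v))(x := rank u p)) f"
    then obtain p where "p \<in> D" "satL (list_of u) ((\<lambda>v. rank u (s v))(x := rank u p)) f" by blast
    then show "\<exists>i<length (list_of u). satL (list_of u) ((\<lambda>v. rank u (s v))(x := i)) f"
      using rank_lt len_list_of by auto
  next
    assume "\<exists>i<length (list_of u). satL (list_of u) ((\<lambda>v. rank u (s v))(x := i)) f"
    then obtain i where i: "i < length (list_of u)" "satL (list_of u) ((\<lambda>v. rank u (s v))(x := i)) f" by blast
    then have "i \<in> rank u ` D" using rank_img len_list_of by simp
    then obtain p where "p \<in> D" "i = rank u p" by blast
    then show "\<exists>p\<in>D. satL (list_of u) ((\<lambda>v. rank u (s v))(x := rank u p)) f" using i by blast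
  qed
  also have "\<dots> \<longleftrightarrow> satL (list_of u) (\<lambda>v. rank u (s v)) (FEx x f)" by simp
  finally show ?case .
qed

lemma sat_closed: "fv f = {} \<Longrightarrow> sat u (\<lambda>_. 0) f \<longleftrightarrow> satL (list_of u) (\<lambda>_. 0) f"
proof -
  assume c: "fv f = {}"
  have "sat u (\<lambda>_. 0) f \<longleftrightarrow> satL (list_of u) (\<lambda>v. rank u 0) f"
    using sat_transfer[of f "\<lambda>_. 0"] c by simp
  also have "\<dots> \<longleftrightarrow> satL (list_of u) (\<lambda>_. 0) f" by (rule satL_closed[OF c])
  finally show ?thesis .
qed

end


context oom
begin

lemma prodl_snoc: "prodl (mult pi) one (L @ [x]) = mult pi (prodl (mult pi) one L) x"
proof (induction L)
  case Nil
  then show ?case by (simp add: mult_one_right mult_one_left)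
next
  case (Cons y L)
  then show ?case by (simp add: mult_assoc)
qed

lemma pi_list:
  assumes "ordword u" "finite (wdom u)" "wdom u \<noteq> {}"
  shows "pi u = prodl (mult pi) one (list_of u)"
  using assms
proof (induction "card (wdom u)" arbitrary: u rule: less_induct)
  case less
  interpret F: fword u using less.prems by unfold_locales
  have cpos: "card (wdom u) > 0" using less.prems card_gt_0_iff by blast
  define m where "m = inv_into (wdom u) (rank u) (card (wdom u) - 1)"
  have "card (wdom u) - 1 \<in> rank u ` wdom u" using F.rank_img cpos by simp
  then have m: "m \<in> wdom u" "rank u m = card (wdom u) - 1"
    unfolding m_def by (auto intro: inv_into_into f_inv_into_f)
  have mmax: "(p, m) \<in> fst u" if p: "p \<in> wdom u" "p \<noteq> m" for p
  proof (rule ccontr)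
    assume "(p, m) \<notin> fst u"
    then have "(m, p) \<in> fst u" using F.rtotal[OF p(1) m(1)] p(2) by blast
    then have "rank u m < rank u p" using F.rank_less[OF m(1) p(1)] p(2) by simp
    then show False using F.rank_lt[OF p(1)] m(2) by simp
  qed
  have rm: "restr (fst u) {m} = {(m, m)}" using F.rrefl[OF m(1)] unfolding restr_def by auto
  show ?case
  proof (cases "card (wdom u) = 1")
    case True
    then obtain z where "wdom u = {z}" by (rule card_1_singletonE)
    then have Dm: "wdom u = {m}" using m(1) by simp
    have "fst u = {(m, m)}"
    proof
      show "fst u \<subseteq> {(m, m)}"
      proof
        fix x assume x: "x \<in> fst u"
        obtain a b where ab: "x = (a, b)" by (cases x)
        then show "x \<in> {(m, m)}" using F.inD[of a b] x Dm by auto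
      qed
      show "{(m, m)} \<subseteq> fst u" using F.rrefl[OF m(1)] by simp
    qed
    then have "pi u = snd u m" using ax_single[of m "snd u"] by (metis prod.collapse)
    moreover have "[snd u m] = list_of u"
      by (rule F.list_of_char) (use True Dm m(2) in auto)
    ultimately show ?thesis by (metis prodl_Cons prodl_Nil mult_one_right)
  next
    case False
    define D' where "D' = wdom u - {m}"
    define u' where "u' = (restr (fst u) D', snd u)"
    have ow': "ordword u'" unfolding u'_def by (rule ordword_restr[OF less.prems(1)])
    have D': "wdom u' = D'" unfolding u'_def wdom_def[of "(_, _)"] fst_conv
      using Field_restr[OF less.prems(1), of D'] unfolding D'_def by auto
    have fin': "finite (wdom u')" using D' less.prems(2) unfolding D'_def by simp
    have cD': "card D' = card (wdom u) - 1" unfolding D'_def using m(1) less.prems(2) by simp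
    have ne': "wdom u' \<noteq> {}" using D' cD' False cpos by auto
    have lt: "card (wdom u') < card (wdom u)" using D' cD' cpos by simp
    have IH: "pi u' = prodl (mult pi) one (list_of u')" using less.hyps[OF lt ow' fin' ne'] .
    interpret F': fword u' using ow' fin' by unfold_locales
    have rk': "rank u' p = rank u p" if p: "p \<in> D'" for p
    proof -
      have "{q \<in> wdom u'. (q, p) \<in> fst u' \<and> q \<noteq> p} = {q \<in> wdom u. (q, p) \<in> fst u \<and> q \<noteq> p}"
      proof
        show "{q \<in> wdom u'. (q, p) \<in> fst u' \<and> q \<noteq> p} \<subseteq> {q \<in> wdom u. (q, p) \<in> fst u \<and> q \<noteq> p}"
          using D' unfolding u'_def D'_def restr_def by auto
        show "{q \<in> wdom u. (q, p) \<in> fst u \<and> q \<noteq> p} \<subseteq> {q \<in> wdom u'. (q, p) \<in> fst u' \<and> q \<noteq> p}"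
        proof
          fix q assume q: "q \<in> {q \<in> wdom u. (q, p) \<in> fst u \<and> q \<noteq> p}"
          have pD: "p \<in> wdom u" "p \<noteq> m" using p unfolding D'_def by auto
          have "q \<noteq> m"
          proof
            assume "q = m"
            then have "rank u m < rank u p" using F.rank_less[OF m(1) pD(1)] q by simp
            then show False using F.rank_lt[OF pD(1)] m(2) by simp
          qed
          then show "q \<in> {q \<in> wdom u'. (q, p) \<in> fst u' \<and> q \<noteq> p}"
            using q p D' unfolding u'_def D'_def restr_def by auto
        qed
      qed
      then show ?thesis unfolding rank_def by simp
    qed
    have L: "list_of u' @ [snd u m] = list_of u"
    proof (rule F.list_of_char)
      show "length (list_of u' @ [snd u m]) = card (wdom u)"
        using F'.len_list_of D' cD' cpos by simp
      fix p assume p: "p \<in> wdom u"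
      show "(list_of u' @ [snd u m]) ! rank u p = snd u p"
      proof (cases "p = m")
        case True
        then show ?thesis using F'.len_list_of D' cD' m(2) by (simp add: nth_append)
      next
        case False
        then have pD': "p \<in> D'" using p unfolding D'_def by simp
        have "rank u p < length (list_of u')" using F'.rank_lt[of p] pD' D' rk'[OF pD'] F'.len_list_of by simp
        then show ?thesis using F'.list_of_nth[of p] pD' D' rk'[OF pD'] unfolding u'_def
          by (simp add: nth_append)
      qed
    qed
    have "pi u = mult pi (pi (restr (fst u) D', snd u)) (pi (restr (fst u) {m}, snd u))"
    proof (rule pi_split[OF less.prems(1)])
      show "D' \<union> {m} = wdom u" using m(1) unfolding D'_def by auto
      show "D' \<inter> {m} = {}" unfolding D'_def by auto
      show "D' \<noteq> {}" using D' ne' by simp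
      show "(p, q) \<in> fst u" if "p \<in> D'" "q \<in> {m}" for p q using mmax that unfolding D'_def by auto
    qed simp
    also have "pi (restr (fst u) {m}, snd u) = snd u m" using rm ax_single by simp
    also have "pi (restr (fst u) D', snd u) = prodl (mult pi) one (list_of u')" using IH unfolding u'_def .
    finally show ?thesis using L[symmetric] prodl_snoc by simp
  qed
qed

end

definition finF :: "'a fo" where
  "finF = FConj
     (FNeg (FEx 0 (FConj (FEx 1 (FLess 1 0)) (FNeg (FEx 1 (FConj (FLess 1 0) (FNeg (FEx 2 (FConj (FLess 1 2) (FLess 2 0))))))))))
     (FNeg (FConj (FEx 0 (FEq 0 0)) (FNeg (FEx 0 (FNeg (FEx 1 (FLess 0 1)))))))"

lemma fv_finF: "fv finF = {}" unfolding finF_def by auto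

lemma sat_finF_sem:
  "sat u s finF \<longleftrightarrow>
    (\<forall>x\<in>wdom u. (\<exists>y\<in>wdom u. (y, x) \<in> fst u \<and> y \<noteq> x) \<longrightarrow>
       (\<exists>y\<in>wdom u. (y, x) \<in> fst u \<and> y \<noteq> x \<and> \<not> (\<exists>z\<in>wdom u. (y, z) \<in> fst u \<and> y \<noteq> z \<and> (z, x) \<in> fst u \<and> z \<noteq> x))) \<and>
    (wdom u \<noteq> {} \<longrightarrow> (\<exists>x\<in>wdom u. \<not> (\<exists>y\<in>wdom u. (x, y) \<in> fst u \<and> x \<noteq> y)))"
  unfolding finF_def by simp blast

lemma sat_finF:
  assumes ow: "ordword u"
  shows "sat u s finF \<longleftrightarrow> finite (wdom u)"
proof
  assume fin: "finite (wdom u)"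
  interpret F: fword u using ow fin by unfold_locales
  have maxr: "\<exists>y\<in>Y. \<forall>z\<in>Y. rank u z \<le> rank u y" if "Y \<noteq> {}" "Y \<subseteq> wdom u" for Y
  proof -
    have fY: "finite Y" using finite_subset[OF that(2) fin] .
    have "Max (rank u ` Y) \<in> rank u ` Y" using fY that(1) by (intro Max_in) auto
    then obtain y where y: "y \<in> Y" "rank u y = Max (rank u ` Y)" by auto
    have "\<forall>z\<in>Y. rank u z \<le> rank u y" using y fY by auto
    then show ?thesis using y by blast
  qed
  have 1: "\<forall>x\<in>wdom u. (\<exists>y\<in>wdom u. (y, x) \<in> fst u \<and> y \<noteq> x) \<longrightarrow>
       (\<exists>y\<in>wdom u. (y, x) \<in> fst u \<and> y \<noteq> x \<and> \<not> (\<exists>z\<in>wdom u. (y, z) \<in> fst u \<and> y \<noteq> z \<and> (z, x) \<in> fst u \<and> z \<noteq> x))"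
  proof (intro ballI impI)
    fix x assume x: "x \<in> wdom u" and ex: "\<exists>y\<in>wdom u. (y, x) \<in> fst u \<and> y \<noteq> x"
    define Y where "Y = {y \<in> wdom u. (y, x) \<in> fst u \<and> y \<noteq> x}"
    obtain y where y: "y \<in> Y" "\<forall>z\<in>Y. rank u z \<le> rank u y" using maxr[of Y] ex unfolding Y_def by auto
    have "\<not> (\<exists>z\<in>wdom u. (y, z) \<in> fst u \<and> y \<noteq> z \<and> (z, x) \<in> fst u \<and> z \<noteq> x)"
    proof
      assume "\<exists>z\<in>wdom u. (y, z) \<in> fst u \<and> y \<noteq> z \<and> (z, x) \<in> fst u \<and> z \<noteq> x"
      then obtain z where z: "z \<in> wdom u" "(y, z) \<in> fst u" "y \<noteq> z" "(z, x) \<in> fst u" "z \<noteq> x" by blast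
      have "z \<in> Y" using z unfolding Y_def by simp
      moreover have "rank u y < rank u z" using F.rank_less[of y z] z y(1) unfolding Y_def by simp
      ultimately show False using y(2) by fastforce
    qed
    then show "\<exists>y\<in>wdom u. (y, x) \<in> fst u \<and> y \<noteq> x \<and> \<not> (\<exists>z\<in>wdom u. (y, z) \<in> fst u \<and> y \<noteq> z \<and> (z, x) \<in> fst u \<and> z \<noteq> x)"
      using y(1) unfolding Y_def by blast
  qed
  have 2: "wdom u \<noteq> {} \<longrightarrow> (\<exists>x\<in>wdom u. \<not> (\<exists>y\<in>wdom u. (x, y) \<in> fst u \<and> x \<noteq> y))"
  proof
    assume "wdom u \<noteq> {}"
    then obtain x where x: "x \<in> wdom u" "\<forall>z\<in>wdom u. rank u z \<le> rank u x" using maxr[of "wdom u"] by auto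
    have "\<not> (\<exists>y\<in>wdom u. (x, y) \<in> fst u \<and> x \<noteq> y)"
    proof
      assume "\<exists>y\<in>wdom u. (x, y) \<in> fst u \<and> x \<noteq> y"
      then obtain y where "y \<in> wdom u" "(x, y) \<in> fst u" "x \<noteq> y" by blast
      then show False using F.rank_less[of x y] x by fastforce
    qed
    then show "\<exists>x\<in>wdom u. \<not> (\<exists>y\<in>wdom u. (x, y) \<in> fst u \<and> x \<noteq> y)" using x(1) by blast
  qed
  show "sat u s finF" unfolding sat_finF_sem using 1 2 by blast
next
  assume "sat u s finF"
  then have S1: "\<forall>x\<in>wdom u. (\<exists>y\<in>wdom u. (y, x) \<in> fst u \<and> y \<noteq> x) \<longrightarrow>
       (\<exists>y\<in>wdom u. (y, x) \<in> fst u \<and> y \<noteq> x \<and> \<not> (\<exists>z\<in>wdom u. (y, z) \<in> fst u \<and> y \<noteq> z \<and> (z, x) \<in> fst u \<and> z \<noteq> x))"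
    and S2: "wdom u \<noteq> {} \<longrightarrow> (\<exists>x\<in>wdom u. \<not> (\<exists>y\<in>wdom u. (x, y) \<in> fst u \<and> x \<noteq> y))"
    unfolding sat_finF_sem by blast+
  have wo: "Well_order (fst u)" using ow unfolding ordword_def .
  have tr: "trans (fst u)" using wo_facts(2)[OF wo] .
  have tot: "\<And>p q. p \<in> wdom u \<Longrightarrow> q \<in> wdom u \<Longrightarrow> p \<noteq> q \<Longrightarrow> (p, q) \<in> fst u \<or> (q, p) \<in> fst u"
    using wo_facts(4)[OF wo] unfolding total_on_def wdom_def by blast
  have rf: "\<And>p. p \<in> wdom u \<Longrightarrow> (p, p) \<in> fst u"
    using wo_facts(1)[OF wo] unfolding refl_on_def wdom_def by blast
  have inD: "\<And>p q. (p, q) \<in> fst u \<Longrightarrow> p \<in> wdom u \<and> q \<in> wdom u"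
    unfolding wdom_def by (auto intro: FieldI1 FieldI2)
  have wf: "wf (fst u - Id)" using wo_facts(5)[OF wo] .
  show "finite (wdom u)"
  proof (rule ccontr)
    assume inf: "\<not> finite (wdom u)"
    then have "wdom u \<noteq> {}" by auto
    then obtain M where M: "M \<in> wdom u" "\<not> (\<exists>y\<in>wdom u. (M, y) \<in> fst u \<and> M \<noteq> y)" using S2 by blast
    have belowM: "{y \<in> wdom u. (y, M) \<in> fst u} = wdom u"
    proof
      show "wdom u \<subseteq> {y \<in> wdom u. (y, M) \<in> fst u}"
      proof
        fix y assume y: "y \<in> wdom u"
        show "y \<in> {y \<in> wdom u. (y, M) \<in> fst u}"
        proof (cases "y = M")
          case True then show ?thesis using rf y by simp
        next
          case False then show ?thesis using tot[OF y M(1)] M(2) y by blast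
        qed
      qed
    qed auto
    define X where "X = {x \<in> wdom u. infinite {y \<in> wdom u. (y, x) \<in> fst u}}"
    have MX: "M \<in> X" using M(1) belowM inf unfolding X_def by simp
    obtain x0 where x0: "x0 \<in> X" "\<And>y. (y, x0) \<in> fst u - Id \<Longrightarrow> y \<notin> X"
      using wfE_min[OF wf MX] by metis
    have x0D: "x0 \<in> wdom u" and x0inf: "infinite {y \<in> wdom u. (y, x0) \<in> fst u}" using x0(1) unfolding X_def by auto
    show False
    proof (cases "\<exists>y\<in>wdom u. (y, x0) \<in> fst u \<and> y \<noteq> x0")
      case False
      then have "{y \<in> wdom u. (y, x0) \<in> fst u} \<subseteq> {x0}" by auto
      then have "finite {y \<in> wdom u. (y, x0) \<in> fst u}" using finite_subset by blast
      then show False using x0inf by simp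
    next
      case True
      then obtain y0 where y0: "y0 \<in> wdom u" "(y0, x0) \<in> fst u" "y0 \<noteq> x0"
        "\<not> (\<exists>z\<in>wdom u. (y0, z) \<in> fst u \<and> y0 \<noteq> z \<and> (z, x0) \<in> fst u \<and> z \<noteq> x0)"
        using S1 x0D by blast
      have "y0 \<notin> X" using x0(2)[of y0] y0(2,3) by simp
      then have fy0: "finite {y \<in> wdom u. (y, y0) \<in> fst u}" using y0(1) unfolding X_def by simp
      have "{y \<in> wdom u. (y, x0) \<in> fst u} \<subseteq> insert x0 {y \<in> wdom u. (y, y0) \<in> fst u}"
      proof
        fix y assume y: "y \<in> {y \<in> wdom u. (y, x0) \<in> fst u}"
        show "y \<in> insert x0 {y \<in> wdom u. (y, y0) \<in> fst u}"
        proof (cases "y = x0")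
          case True then show ?thesis by simp
        next
          case yx: False
          show ?thesis
          proof (cases "y = y0")
            case True then show ?thesis using rf y0(1) by simp
          next
            case False
            have "(y, y0) \<in> fst u"
            proof (rule ccontr)
              assume "(y, y0) \<notin> fst u"
              then have "(y0, y) \<in> fst u" using tot[OF _ y0(1) False] y by blast
              then show False using y0(4) y yx False by blast
            qed
            then show ?thesis using y by simp
          qed
        qed
      qed
      then have "finite {y \<in> wdom u. (y, x0) \<in> fst u}" using fy0 finite_subset by blast
      then show False using x0inf by simp
    qed
  qed
qed

lemma clo_cl_sharp: "clo (mult pi) sh A = cl_sharp pi sh A"
proof
  show "clo (mult pi) sh A \<subseteq> cl_sharp pi sh A"
  proof
    fix x assume "x \<in> clo (mult pi) sh A"
    then show "x \<in> cl_sharp pi sh A" by (induction rule: clo.induct) (auto intro: cl_sharp.intros)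
  qed
  show "cl_sharp pi sh A \<subseteq> clo (mult pi) sh A"
  proof
    fix x assume "x \<in> cl_sharp pi sh A"
    then show "x \<in> clo (mult pi) sh A" by (induction rule: cl_sharp.induct) (auto intro: clo.intros)
  qed
qed

lemma deep_def:
  assumes "FOL K"
  shows "fo_definable {u. ordword u \<and> finite (wdom u) \<and> list_of u \<in> K}"
proof -
  obtain f where f: "fv f = {}" "\<forall>w. satL w (\<lambda>_. 0) f \<longleftrightarrow> w \<in> K" using assms unfolding FOL_def by blast
  have "{u. ordword u \<and> finite (wdom u) \<and> list_of u \<in> K} = {u. ordword u \<and> sat u (\<lambda>_. 0) (FConj finF f)}"
  proof (rule set_eqI)
    fix u
    show "u \<in> {u. ordword u \<and> finite (wdom u) \<and> list_of u \<in> K} \<longleftrightarrow> u \<in> {u. ordword u \<and> sat u (\<lambda>_. 0) (FConj finF f)}"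
    proof (cases "ordword u \<and> finite (wdom u)")
      case True
      interpret F: fword u using True by unfold_locales auto
      show ?thesis using True sat_finF[of u] F.sat_closed[OF f(1)] f(2) by simp
    next
      case False
      then show ?thesis using sat_finF[of u] by auto
    qed
  qed
  moreover have "fv (FConj finF f) = {}" using f(1) fv_finF by simp
  ultimately show ?thesis unfolding fo_definable_def by blast
qed

theorem lemma5p8:
  fixes le :: "'m::finite \<Rightarrow> 'm \<Rightarrow> bool" and pi :: "'m oword \<Rightarrow> 'm" and sh :: "'m \<Rightarrow> 'm"
    and A :: "'m set"
  assumes "ordinal_monoid_with_merge le pi sh"
  shows "\<exists>rho. fo_approximant le pi (plus_words A) (cl_sharp pi sh A) rho"
proof -
  have o: "ordered_ordinal_monoid le pi" using assms unfolding ordinal_monoid_with_merge_def by blast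
  interpret oom le pi by (rule oom.intro[OF o])
  have g: "gm le (mult pi) (pi empty_word) sh" by (rule oom_gm[OF assms])
  obtain R where R: "approx le (mult pi) (pi empty_word) sh A R" using main_list[OF g] by blast
  define rho where "rho u = R (list_of u)" for u
  have PW: "plus_words A = {u. ordword u \<and> finite (wdom u) \<and> list_of u \<in> Pl A}"
  proof (rule set_eqI)
    fix u
    show "u \<in> plus_words A \<longleftrightarrow> u \<in> {u. ordword u \<and> finite (wdom u) \<and> list_of u \<in> Pl A}"
    proof (cases "ordword u \<and> finite (wdom u)")
      case True
      interpret F: fword u using True by unfold_locales auto
      have "list_of u \<noteq> [] \<longleftrightarrow> wdom u \<noteq> {}" using F.len_list_of True by auto
      then show ?thesis using True F.set_list_of unfolding plus_words_def words_over_def Pl_def by auto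
    next
      case False
      then show ?thesis unfolding plus_words_def words_over_def by auto
    qed
  qed
  have "fo_approximant le pi (plus_words A) (cl_sharp pi sh A) rho"
    unfolding fo_approximant_def
  proof (intro conjI allI ballI)
    show "fo_definable (plus_words A)" unfolding PW by (rule deep_def[OF FOL_Pl])
  next
    fix m
    have eq: "{u \<in> plus_words A. rho u = m} = {u. ordword u \<and> finite (wdom u) \<and> list_of u \<in> {w \<in> Pl A. R w = m}}"
      unfolding PW rho_def by auto
    have "FOL {w \<in> Pl A. R w = m}" using R unfolding approx_def by blast
    then show "fo_definable {u \<in> plus_words A. rho u = m}" unfolding eq by (rule deep_def)
  next
    fix u assume u: "u \<in> plus_words A"
    then have uu: "ordword u" "finite (wdom u)" "list_of u \<in> Pl A" unfolding PW by auto
    interpret F: fword u using uu by unfold_locales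
    have ne: "wdom u \<noteq> {}" using uu(3) F.len_list_of unfolding Pl_def by auto
    have "pi u = prodl (mult pi) (pi empty_word) (list_of u)" by (rule pi_list[OF uu(1,2) ne])
    moreover have "le (prodl (mult pi) (pi empty_word) (list_of u)) (R (list_of u))"
      using R uu(3) unfolding approx_def by blast
    ultimately show "le (pi u) (rho u)" unfolding rho_def by simp
    have "R (list_of u) \<in> clo (mult pi) sh A" using R uu(3) unfolding approx_def by blast
    then show "rho u \<in> cl_sharp pi sh A" unfolding rho_def clo_cl_sharp .
  qed
  then show ?thesis by blast
qed

end
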